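(* Let $\nu\in\mathcal N$. Then the process $$L_\nu(x,t):=\sup_{z\le x}\big\{\nu(z)+L((z,0),(x,t))\big\},\qquad x\in\mathbb R,\ t\ge0,$$ is almost surely well defined (finite), and the measures $M^t_\nu$ on $\mathbb R$ defined by $M^t_\nu((x,y]):=L_\nu(y,t)-L_\nu(x,t)$ for $x\le y$ are positive locally finite measures which evolve in $t\ge0$ according to the Hammersley interacting fluid system, i.e. $M^0_\nu=\nu$ and: if there is a point of $\mathbf P$ at $(x_0,t)$ with weight $\omega$, then $M^t_\nu=M^{t-}_\nu$ on $(-\infty,x_0)$, $M^t_\nu(\{x_0\})=M^{t-}_\nu(\{x_0\})+\omega$, and $M^t_\nu((x_0,x])=\big(M^{t-}_\nu((x_0,x])-\omega\big)_+$ for all $x>x_0$, where $M^{t-}_\nu$ is the configuration obtained if the point at $(x_0,t)$ were removed.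
   Context: Let $\mathbf P\subset\mathbb R^2$ be a homogeneous Poisson point process of intensity one with i.i.d. positive weights $\{\omega_{\mathbf p}\}$ of distribution $F$, independent of $\mathbf P$; assume $\int_0^\infty e^{ax}dF(x)<\infty$ for some $a>0$. For $\mathbf p\le\mathbf q$ (coordinatewise), $L(\mathbf p,\mathbf q)$ is the maximal total weight of a coordinatewise increasing finite sequence of points of $\mathbf P$ in $\{\mathbf x:p_1<x_1\le q_1,\ p_2<x_2\le q_2\}$ (empty sum $0$); only points of $\mathbf P$ in $\mathbb R\times(0,\infty)$ are relevant here. For a positive locally finite measure $\nu$ on $\mathbb R$ write $\nu(x)=\nu((0,x])$ for $x\ge0$ and $\nu(x)=-\nu((x,0])$ for $x<0$. $\mathcal N$ is the set of positive locally finite measures $\nu$ on $\mathbb R$ with $\liminf_{y\to-\infty}\nu(y)/y>0$. *)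

theory Defs
  imports "HOL-Probability.Probability"
begin

text \<open>A marked point configuration: a set of pairs (location in the plane, weight).\<close>
type_synonym mconf = "((real \<times> real) \<times> real) set"

definition incr_chain :: "((real \<times> real) \<times> real) list \<Rightarrow> bool" where
  "incr_chain xs \<longleftrightarrow> sorted_wrt (\<lambda>a b. fst (fst a) \<le> fst (fst b) \<and> snd (fst a) \<le> snd (fst b)
       \<and> fst a \<noteq> fst b) xs"

definition LPP :: "mconf \<Rightarrow> real \<times> real \<Rightarrow> real \<times> real \<Rightarrow> ereal" where
  "LPP Q p q = (SUP xs \<in> {xs. set xs \<subseteq> Q \<and> incr_chain xs \<and>
      (\<forall>a\<in>set xs. fst p < fst (fst a) \<and> fst (fst a) \<le> fst q \<and>
                  snd p < snd (fst a) \<and> snd (fst a) \<le> snd q)}.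
      ereal (sum_list (map snd xs)))"

text \<open>The signed distribution function nu(x) of a measure on the line.\<close>
definition nuF :: "real measure \<Rightarrow> real \<Rightarrow> real" where
  "nuF \<nu> x = (if 0 \<le> x then measure \<nu> {0<..x} else - measure \<nu> {x<..0})"

definition calN :: "real measure set" where
  "calN = {\<nu>. sets \<nu> = sets borel \<and> (\<forall>a b. emeasure \<nu> {a<..b} < \<infinity>) \<and>
              Liminf at_bot (\<lambda>y. ereal (nuF \<nu> y / y)) > 0}"

definition Lnu :: "mconf \<Rightarrow> real measure \<Rightarrow> real \<Rightarrow> real \<Rightarrow> ereal" where
  "Lnu Q \<nu> x t = (SUP z \<in> {..x}. ereal (nuF \<nu> z) + LPP Q (z, 0) (x, t))"

definition is_M :: "mconf \<Rightarrow> real measure \<Rightarrow> real \<Rightarrow> real measure \<Rightarrow> bool" where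
  "is_M Q \<nu> t m \<longleftrightarrow> sets m = sets borel \<and> (\<forall>a b. emeasure m {a<..b} < \<infinity>) \<and>
     (\<forall>x y. x \<le> y \<longrightarrow> ereal (measure m {x<..y}) = Lnu Q \<nu> y t - Lnu Q \<nu> x t)"

definition Mt :: "mconf \<Rightarrow> real measure \<Rightarrow> real \<Rightarrow> real measure" where
  "Mt Q \<nu> t = (THE m. is_M Q \<nu> t m)"

text \<open>Q is a Poisson point process on (R^2) x R with intensity Lebesgue (x) F,
  i.e. a Poisson process of intensity one in the plane with i.i.d. marks of law F
  independent of the points (marking theorem).\<close>
definition marked_poisson :: "'a measure \<Rightarrow> ('a \<Rightarrow> mconf) \<Rightarrow> real measure \<Rightarrow> bool" where
  "marked_poisson M Q F \<longleftrightarrow>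
     (let \<mu> = (lborel :: (real \<times> real) measure) \<Otimes>\<^sub>M F in
       (\<forall>B \<in> sets \<mu>. emeasure \<mu> B < \<infinity> \<longrightarrow>
          (AE \<omega> in M. finite (Q \<omega> \<inter> B)) \<and>
          (\<forall>k::nat. {\<omega> \<in> space M. card (Q \<omega> \<inter> B) = k} \<in> sets M \<and>
             measure M {\<omega> \<in> space M. card (Q \<omega> \<inter> B) = k}
               = measure \<mu> B ^ k / fact k * exp (- measure \<mu> B))) \<and>
       (\<forall>(I::nat set) B. finite I \<longrightarrow> B ` I \<subseteq> sets \<mu> \<longrightarrow>
          (\<forall>i\<in>I. emeasure \<mu> (B i) < \<infinity>) \<longrightarrow> disjoint_family_on B I \<longrightarrow>
          prob_space.indep_vars M (\<lambda>_. count_space UNIV) (\<lambda>i \<omega>. card (Q \<omega> \<inter> B i)) I))"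

end

theory Submission
  imports Defs
begin

lemma Ioc_fin_measure_split:
  fixes \<nu> :: "real measure"
  assumes S: "sets \<nu> = sets borel" and fin: "\<forall>a b. emeasure \<nu> {a<..b} < \<infinity>"
    and "a \<le> b" "b \<le> c"
  shows "measure \<nu> {a<..c} = measure \<nu> {a<..b} + measure \<nu> {b<..c}"
proof -
  have "{a<..c} = {a<..b} \<union> {b<..c}" using assms(3,4) by auto
  moreover have "measure \<nu> ({a<..b} \<union> {b<..c}) = measure \<nu> {a<..b} + measure \<nu> {b<..c}"
    by (rule measure_Union) (use fin S in \<open>auto simp: less_top\<close>)
  ultimately show ?thesis by simp
qed

lemma nuF_diff:
  fixes \<nu> :: "real measure"
  assumes S: "sets \<nu> = sets borel" and fin: "\<forall>a b. emeasure \<nu> {a<..b} < \<infinity>"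
    and xy: "x \<le> y"
  shows "nuF \<nu> y - nuF \<nu> x = measure \<nu> {x<..y}"
proof (cases "0 \<le> x")
  case True
  then have "nuF \<nu> y = measure \<nu> {0<..y}" "nuF \<nu> x = measure \<nu> {0<..x}"
    using xy unfolding nuF_def by auto
  then show ?thesis using Ioc_fin_measure_split[OF S fin True xy] by linarith
next
  case False
  show ?thesis
  proof (cases "0 \<le> y")
    case True
    then have "nuF \<nu> y = measure \<nu> {0<..y}" "nuF \<nu> x = - measure \<nu> {x<..0}"
      using False unfolding nuF_def by auto
    then show ?thesis using Ioc_fin_measure_split[OF S fin _ True, of x] False by linarith
  next
    case False2: False
    then have "nuF \<nu> y = - measure \<nu> {y<..0}" "nuF \<nu> x = - measure \<nu> {x<..0}"
      using False unfolding nuF_def by auto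
    then show ?thesis using Ioc_fin_measure_split[OF S fin xy, of 0] False2 by linarith
  qed
qed

lemma nuF_mono:
  assumes S: "sets \<nu> = sets borel" and fin: "\<forall>a b. emeasure \<nu> {a<..b} < \<infinity>"
    and "x \<le> y"
  shows "nuF \<nu> x \<le> nuF \<nu> y"
  using nuF_diff[OF assms] measure_nonneg[of \<nu> "{x<..y}"] by linarith

lemma nuF_right_cont:
  assumes S: "sets \<nu> = sets borel" and fin: "\<forall>a b. emeasure \<nu> {a<..b} < \<infinity>"
  shows "continuous (at_right a) (nuF \<nu>)"
  unfolding continuous_within
proof (rule tendsto_at_right_sequentially[where b="a + 1"])
  fix f :: "nat \<Rightarrow> real" assume f3: "\<And>n. a < f n" and f4: "\<And>n. f n < a + 1" and f1: "decseq f" and f2: "f \<longlonglongrightarrow> a"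
  note f = f1 f2 f3 f4
  have L: "(\<lambda>n. measure \<nu> {a<..f n}) \<longlonglongrightarrow> measure \<nu> (\<Inter>i. {a<..f i})"
  proof (rule Lim_measure_decseq)
    show "range (\<lambda>i. {a<..f i}) \<subseteq> sets \<nu>" unfolding S by (intro image_subsetI greaterThanAtMost_borel)
    show "decseq (\<lambda>i. {a<..f i})"
    proof (rule decseq_SucI)
      fix n show "{a<..f (Suc n)} \<subseteq> {a<..f n}" using decseqD[OF f(1), of n "Suc n"] by auto
    qed
    show "emeasure \<nu> {a<..f i} \<noteq> \<infinity>" for i using fin by (auto simp: less_top)
  qed
  have E: "(\<Inter>i. {a<..f i}) = {}"
  proof -
    { fix x assume x: "x \<in> (\<Inter>i. {a<..f i})"
      then have "a < x" by auto
      then have "eventually (\<lambda>n. f n < x) sequentially" using order_tendstoD(2)[OF f(2)] by blast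
      then obtain n where "f n < x" by (auto simp: eventually_sequentially)
      moreover from x have "x \<in> {a<..f n}" by blast
      ultimately have False by simp }
    then show ?thesis by blast
  qed
  from L have "(\<lambda>n. measure \<nu> {a<..f n}) \<longlonglongrightarrow> 0" unfolding E by simp
  moreover have "measure \<nu> {a<..f n} = nuF \<nu> (f n) - nuF \<nu> a" for n
    using nuF_diff[OF S fin, of a "f n"] f(3)[of n] by simp
  ultimately have "(\<lambda>n. nuF \<nu> (f n) - nuF \<nu> a) \<longlonglongrightarrow> 0" by simp
  then have "(\<lambda>n. (nuF \<nu> (f n) - nuF \<nu> a) + nuF \<nu> a) \<longlonglongrightarrow> 0 + nuF \<nu> a"
    by (intro tendsto_add) auto
  then show "(\<lambda>n. nuF \<nu> (f n)) \<longlonglongrightarrow> nuF \<nu> a" by simp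
qed simp

lemma nuF_left_nonatom:
  assumes S: "sets \<nu> = sets borel" and fin: "\<forall>a b. emeasure \<nu> {a<..b} < \<infinity>"
    and at: "emeasure \<nu> {a} = 0" and "e > 0"
  shows "\<exists>z<a. nuF \<nu> a - e < nuF \<nu> z"
proof -
  let ?f = "\<lambda>n::nat. a - 1 / (Suc n)"
  have "(\<lambda>n. measure \<nu> {?f n<..a}) \<longlonglongrightarrow> measure \<nu> (\<Inter>i. {?f i<..a})"
  proof (rule Lim_measure_decseq)
    show "range (\<lambda>i. {?f i<..a}) \<subseteq> sets \<nu>" unfolding S by (intro image_subsetI greaterThanAtMost_borel)
    show "decseq (\<lambda>i. {?f i<..a})"
    proof (rule decseq_SucI)
      fix n :: nat
      have "1 / real (Suc (Suc n)) \<le> 1 / real (Suc n)" by (rule frac_le) auto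
      then show "{?f (Suc n)<..a} \<subseteq> {?f n<..a}" by auto
    qed
    show "emeasure \<nu> {?f i<..a} \<noteq> \<infinity>" for i using fin by (auto simp: less_top)
  qed
  also have "(\<Inter>i. {?f i<..a}) = {a}"
  proof -
    { fix x assume x: "x \<in> (\<Inter>i. {?f i<..a})"
      have "x = a"
      proof (rule ccontr)
        assume "x \<noteq> a" with x have "x < a" by auto
        then have "0 < a - x" by simp
        then obtain n :: nat where n: "1 / real (Suc n) < a - x"
          by (rule nat_approx_posE)
        moreover from x have "x \<in> {?f n<..a}" by blast
        ultimately show False by simp
      qed }
    then show ?thesis by auto
  qed
  also have "measure \<nu> {a} = 0" using at by (simp add: measure_def)
  finally have lim: "(\<lambda>n. measure \<nu> {?f n<..a}) \<longlonglongrightarrow> 0" .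
  obtain n where "norm (measure \<nu> {?f n<..a} - 0) < e"
    using LIMSEQ_D[OF lim \<open>e > 0\<close>] by blast
  then have "measure \<nu> {?f n<..a} < e" by simp
  moreover have "nuF \<nu> a - nuF \<nu> (?f n) = measure \<nu> {?f n<..a}"
    by (rule nuF_diff[OF S fin]) simp
  ultimately show ?thesis by (intro exI[of _ "?f n"]) auto
qed


definition inbox :: "real \<times> real \<Rightarrow> real \<times> real \<Rightarrow> (real \<times> real) \<times> real \<Rightarrow> bool" where
  "inbox p q a \<longleftrightarrow> fst p < fst (fst a) \<and> fst (fst a) \<le> fst q \<and>
                  snd p < snd (fst a) \<and> snd (fst a) \<le> snd q"

definition lchains :: "mconf \<Rightarrow> real \<times> real \<Rightarrow> real \<times> real \<Rightarrow> ((real \<times> real) \<times> real) list set" where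
  "lchains Q p q = {xs. set xs \<subseteq> Q \<and> incr_chain xs \<and> (\<forall>a\<in>set xs. inbox p q a)}"

definition boxset :: "mconf \<Rightarrow> real \<times> real \<Rightarrow> real \<times> real \<Rightarrow> mconf" where
  "boxset Q p q = {a \<in> Q. inbox p q a}"

lemma LPP_alt: "LPP Q p q = (SUP xs \<in> lchains Q p q. ereal (sum_list (map snd xs)))"
  unfolding LPP_def lchains_def inbox_def by simp

lemma lchains_Nil: "[] \<in> lchains Q p q"
  by (simp add: lchains_def incr_chain_def)

lemma LPP_ge: "xs \<in> lchains Q p q \<Longrightarrow> ereal (sum_list (map snd xs)) \<le> LPP Q p q"
  unfolding LPP_alt by (rule SUP_upper)

lemma LPP_nonneg: "0 \<le> LPP Q p q"
proof -
  have "ereal (sum_list (map snd ([] :: ((real \<times> real) \<times> real) list))) \<le> LPP Q p q" by (rule LPP_ge[OF lchains_Nil])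
  then show ?thesis by (simp add: zero_ereal_def)
qed

lemma LPP_le: "(\<And>xs. xs \<in> lchains Q p q \<Longrightarrow> ereal (sum_list (map snd xs)) \<le> B) \<Longrightarrow> LPP Q p q \<le> B"
  unfolding LPP_alt by (rule SUP_least)

lemma incr_chain_distinct: "incr_chain xs \<Longrightarrow> distinct xs"
  unfolding incr_chain_def by (induction xs) auto

lemma chains_distinct: "xs \<in> lchains Q p q \<Longrightarrow> distinct xs"
  unfolding lchains_def using incr_chain_distinct by auto

lemma chains_boxset: "xs \<in> lchains Q p q \<Longrightarrow> set xs \<subseteq> boxset Q p q"
  unfolding lchains_def boxset_def by auto

lemma LPP_fin_bound:
  assumes "finite (boxset Q p q)"
  shows "LPP Q p q \<le> ereal (\<Sum>a\<in>boxset Q p q. max 0 (snd a))"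
proof (rule LPP_le)
  fix xs assume xs: "xs \<in> lchains Q p q"
  have "sum_list (map snd xs) = (\<Sum>a\<in>set xs. snd a)"
    using chains_distinct[OF xs] by (simp add: sum_list_distinct_conv_sum_set)
  also have "\<dots> \<le> (\<Sum>a\<in>set xs. max 0 (snd a))" by (intro sum_mono) auto
  also have "\<dots> \<le> (\<Sum>a\<in>boxset Q p q. max 0 (snd a))"
    by (rule sum_mono2[OF assms chains_boxset[OF xs]]) auto
  finally show "ereal (sum_list (map snd xs)) \<le> ereal (\<Sum>a\<in>boxset Q p q. max 0 (snd a))" by simp
qed

lemma LPP_finite:
  assumes "finite (boxset Q p q)"
  shows "LPP Q p q \<noteq> \<infinity>" "LPP Q p q \<noteq> - \<infinity>"
  using LPP_fin_bound[OF assms] LPP_nonneg[of Q p q] by auto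

lemma chains_mono:
  assumes "Q \<subseteq> Q'" "fst p' \<le> fst p" "snd p' \<le> snd p" "fst q \<le> fst q'" "snd q \<le> snd q'"
  shows "lchains Q p q \<subseteq> lchains Q' p' q'"
  using assms unfolding lchains_def inbox_def by fastforce

lemma LPP_mono:
  assumes "Q \<subseteq> Q'" "fst p' \<le> fst p" "snd p' \<le> snd p" "fst q \<le> fst q'" "snd q \<le> snd q'"
  shows "LPP Q p q \<le> LPP Q' p' q'"
  unfolding LPP_alt by (rule SUP_subset_mono[OF chains_mono[OF assms]]) simp

lemma LPP_cong: "lchains Q p q = lchains Q' p' q' \<Longrightarrow> LPP Q p q = LPP Q' p' q'"
  unfolding LPP_alt by simp

lemma chains_empty_box:
  assumes "boxset Q p q = {}"
  shows "lchains Q p q = {[]}"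
proof -
  { fix xs assume "xs \<in> lchains Q p q"
    then have "set xs \<subseteq> {}" using chains_boxset assms by blast
    then have "xs = []" by simp }
  then show ?thesis using lchains_Nil by blast
qed

lemma LPP_empty_box: "boxset Q p q = {} \<Longrightarrow> LPP Q p q = 0"
  unfolding LPP_alt by (simp add: chains_empty_box)

lemma LPP_t0: "snd q \<le> snd p \<Longrightarrow> LPP Q p q = 0"
  by (rule LPP_empty_box) (auto simp: boxset_def inbox_def)

lemma lchains_alt: "lchains Q p q = {xs. set xs \<subseteq> boxset Q p q \<and> incr_chain xs}"
  unfolding lchains_def boxset_def by blast

lemma LPP_eq_boxset: "boxset Q p q = boxset Q' p' q' \<Longrightarrow> LPP Q p q = LPP Q' p' q'"
  by (rule LPP_cong) (simp add: lchains_alt)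

lemma boxset_mono:
  assumes "Q \<subseteq> Q'" "fst p' \<le> fst p" "snd p' \<le> snd p" "fst q \<le> fst q'" "snd q \<le> snd q'"
  shows "boxset Q p q \<subseteq> boxset Q' p' q'"
  using assms unfolding boxset_def inbox_def by force

lemma incr_chain_app1:
  "incr_chain (ys @ [p]) \<longleftrightarrow> incr_chain ys \<and>
     (\<forall>a\<in>set ys. fst (fst a) \<le> fst (fst p) \<and> snd (fst a) \<le> snd (fst p) \<and> fst a \<noteq> fst p)"
  unfolding incr_chain_def sorted_wrt_append by auto

lemma LPP_update:
  assumes Q: "Q = insert ((x0,t0),w) Q0" and pn: "((x0,t0),w) \<notin> Q0"
    and dist: "\<forall>a\<in>Q0. 0 < snd (fst a) \<longrightarrow> fst (fst a) \<noteq> x0 \<and> snd (fst a) \<noteq> t0"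
    and zx: "z < x0" "x0 \<le> x" and t0: "0 < t0"
  shows "LPP Q (z,0) (x,t0) = max (LPP Q0 (z,0) (x,t0)) (LPP Q0 (z,0) (x0,t0) + ereal w)"
proof (rule antisym)
  let ?p = "((x0,t0),w)"
  show "LPP Q (z,0) (x,t0) \<le> max (LPP Q0 (z,0) (x,t0)) (LPP Q0 (z,0) (x0,t0) + ereal w)"
  proof (rule LPP_le)
    fix xs assume xs: "xs \<in> lchains Q (z,0) (x,t0)"
    have dxs: "distinct xs" by (rule chains_distinct[OF xs])
    show "ereal (sum_list (map snd xs)) \<le> max (LPP Q0 (z,0) (x,t0)) (LPP Q0 (z,0) (x0,t0) + ereal w)"
    proof (cases "?p \<in> set xs")
      case False
      then have "xs \<in> lchains Q0 (z,0) (x,t0)" using xs Q unfolding lchains_def by auto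
      then have "ereal (sum_list (map snd xs)) \<le> LPP Q0 (z,0) (x,t0)" by (rule LPP_ge)
      then show ?thesis by (simp add: le_max_iff_disj)
    next
      case True
      then obtain ys zs where xs_eq: "xs = ys @ ?p # zs" by (meson split_list)
      have inc: "incr_chain xs" and sub: "set xs \<subseteq> Q" and box: "\<forall>a\<in>set xs. inbox (z,0) (x,t0) a"
        using xs unfolding lchains_def by auto
      have R: "\<forall>a\<in>set ys. fst (fst a) \<le> x0 \<and> snd (fst a) \<le> t0 \<and> fst a \<noteq> (x0,t0)"
        and R2: "\<forall>b\<in>set zs. x0 \<le> fst (fst b) \<and> t0 \<le> snd (fst b) \<and> (x0,t0) \<noteq> fst b"
        and incys: "incr_chain ys"
        using inc unfolding xs_eq incr_chain_def sorted_wrt_append by auto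
      have zs: "zs = []"
      proof (rule ccontr)
        assume "zs \<noteq> []"
        then obtain b where b: "b \<in> set zs" by (cases zs) auto
        then have "b \<in> Q" "inbox (z,0) (x,t0) b" using sub box xs_eq by auto
        moreover have "b \<noteq> ?p" using R2 b by auto
        ultimately have "b \<in> Q0" "snd (fst b) \<le> t0" "0 < snd (fst b)" using Q by (auto simp: inbox_def)
        moreover have "t0 \<le> snd (fst b)" using R2 b by auto
        ultimately show False using dist by force
      qed
      have pys: "?p \<notin> set ys" using dxs xs_eq by auto
      have "ys \<in> lchains Q0 (z,0) (x0,t0)"
        unfolding lchains_def
      proof (intro CollectI conjI ballI)
        show "set ys \<subseteq> Q0" using sub xs_eq pys Q by auto
        show "incr_chain ys" by (rule incys)
        fix a assume a: "a \<in> set ys"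
        then have "inbox (z,0) (x,t0) a" using box xs_eq by auto
        then show "inbox (z, 0) (x0, t0) a" using R a by (auto simp: inbox_def)
      qed
      then have "ereal (sum_list (map snd ys)) \<le> LPP Q0 (z,0) (x0,t0)" by (rule LPP_ge)
      then have "ereal (sum_list (map snd ys)) + ereal w \<le> LPP Q0 (z,0) (x0,t0) + ereal w"
        by (rule add_right_mono)
      moreover have "sum_list (map snd xs) = sum_list (map snd ys) + w" using xs_eq zs by simp
      ultimately show ?thesis by (simp add: le_max_iff_disj)
    qed
  qed
next
  let ?p = "((x0,t0),w)"
  have "LPP Q0 (z,0) (x,t0) \<le> LPP Q (z,0) (x,t0)" by (rule LPP_mono) (use Q in auto)
  moreover have "LPP Q0 (z,0) (x0,t0) + ereal w \<le> LPP Q (z,0) (x,t0)"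
  proof -
    have "LPP Q0 (z,0) (x0,t0) + ereal w = (SUP ys \<in> lchains Q0 (z,0) (x0,t0). ereal (sum_list (map snd ys)) + ereal w)"
      unfolding LPP_alt by (rule SUP_ereal_add_left[symmetric]) (use lchains_Nil[of Q0 "(z,0)" "(x0,t0)"] in auto)
    also have "\<dots> \<le> LPP Q (z,0) (x,t0)"
    proof (rule SUP_least)
      fix ys assume ys: "ys \<in> lchains Q0 (z,0) (x0,t0)"
      have "ys @ [?p] \<in> lchains Q (z,0) (x,t0)"
        unfolding lchains_def
      proof (intro CollectI conjI ballI)
        show "set (ys @ [?p]) \<subseteq> Q" using ys Q unfolding lchains_def by auto
        have "\<forall>a\<in>set ys. fst (fst a) \<le> x0 \<and> snd (fst a) \<le> t0 \<and> fst a \<noteq> (x0,t0)"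
        proof
          fix a assume a: "a \<in> set ys"
          then have "a \<in> Q0" "inbox (z,0) (x0,t0) a" using ys unfolding lchains_def by auto
          then show "fst (fst a) \<le> x0 \<and> snd (fst a) \<le> t0 \<and> fst a \<noteq> (x0,t0)"
            using dist by (auto simp: inbox_def)
        qed
        then show "incr_chain (ys @ [?p])" using ys unfolding incr_chain_app1 lchains_def by auto
        fix a assume "a \<in> set (ys @ [?p])"
        then show "inbox (z,0) (x,t0) a" using ys zx t0 unfolding lchains_def by (auto simp: inbox_def)
      qed
      then have "ereal (sum_list (map snd (ys @ [?p]))) \<le> LPP Q (z,0) (x,t0)" by (rule LPP_ge)
      then show "ereal (sum_list (map snd ys)) + ereal w \<le> LPP Q (z,0) (x,t0)" by simp
    qed
    finally show ?thesis .
  qed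
  ultimately show "max (LPP Q0 (z,0) (x,t0)) (LPP Q0 (z,0) (x0,t0) + ereal w) \<le> LPP Q (z,0) (x,t0)"
    by simp
qed


definition good :: "real measure \<Rightarrow> mconf \<Rightarrow> bool" where
  "good \<nu> Q \<longleftrightarrow>
    (\<forall>n::nat. finite {a\<in>Q. \<bar>fst (fst a)\<bar> \<le> real n \<and> \<bar>snd (fst a)\<bar> \<le> real n}) \<and>
    (\<forall>a\<in>Q. 0 < snd a) \<and>
    (\<forall>a\<in>Q. \<forall>b\<in>Q. 0 < snd (fst a) \<longrightarrow> 0 < snd (fst b) \<longrightarrow> a \<noteq> b \<longrightarrow>
        fst (fst a) \<noteq> fst (fst b) \<and> snd (fst a) \<noteq> snd (fst b)) \<and>
    (\<forall>a\<in>Q. 0 < snd (fst a) \<longrightarrow> emeasure \<nu> {fst (fst a)} = 0) \<and>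
    (\<forall>T::nat. \<forall>e>0. \<exists>R. \<forall>r\<ge>R. LPP Q (-r,0) (r, real T) \<le> ereal (e*r))"

lemma good_subset:
  assumes "good \<nu> Q" "Q0 \<subseteq> Q"
  shows "good \<nu> Q0"
  unfolding good_def
proof (intro conjI allI impI)
  fix n :: nat
  show "finite {a\<in>Q0. \<bar>fst (fst a)\<bar> \<le> real n \<and> \<bar>snd (fst a)\<bar> \<le> real n}"
    by (rule finite_subset[of _ "{a\<in>Q. \<bar>fst (fst a)\<bar> \<le> real n \<and> \<bar>snd (fst a)\<bar> \<le> real n}"])
       (use assms in \<open>auto simp: good_def\<close>)
next
  show "\<forall>a\<in>Q0. 0 < snd a" using assms by (auto simp: good_def)
next
  show "\<forall>a\<in>Q0. \<forall>b\<in>Q0. 0 < snd (fst a) \<longrightarrow> 0 < snd (fst b) \<longrightarrow> a \<noteq> b \<longrightarrow>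
        fst (fst a) \<noteq> fst (fst b) \<and> snd (fst a) \<noteq> snd (fst b)"
    using assms unfolding good_def by blast
next
  show "\<forall>a\<in>Q0. 0 < snd (fst a) \<longrightarrow> emeasure \<nu> {fst (fst a)} = 0"
    using assms unfolding good_def by blast
next
  fix T :: nat and e :: real assume "0 < e"
  then obtain R where R: "\<forall>r\<ge>R. LPP Q (-r,0) (r, real T) \<le> ereal (e*r)"
    using assms unfolding good_def by blast
  show "\<exists>R. \<forall>r\<ge>R. LPP Q0 (-r,0) (r, real T) \<le> ereal (e*r)"
  proof (intro exI allI impI)
    fix r assume "R \<le> r"
    have "LPP Q0 (-r,0) (r, real T) \<le> LPP Q (-r,0) (r, real T)" by (rule LPP_mono) (use assms in auto)
    also have "\<dots> \<le> ereal (e*r)" using R \<open>R \<le> r\<close> by blast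
    finally show "LPP Q0 (-r,0) (r, real T) \<le> ereal (e*r)" .
  qed
qed

lemma good_boxfin:
  assumes "good \<nu> Q"
  shows "finite (boxset Q p q)"
proof -
  obtain n :: nat where n: "\<bar>fst p\<bar> + \<bar>fst q\<bar> + \<bar>snd p\<bar> + \<bar>snd q\<bar> \<le> real n"
    using real_arch_simple by blast
  have "boxset Q p q \<subseteq> {a\<in>Q. \<bar>fst (fst a)\<bar> \<le> real n \<and> \<bar>snd (fst a)\<bar> \<le> real n}"
    using n by (auto simp: boxset_def inbox_def)
  moreover have "finite {a\<in>Q. \<bar>fst (fst a)\<bar> \<le> real n \<and> \<bar>snd (fst a)\<bar> \<le> real n}"
    using assms by (auto simp: good_def)
  ultimately show ?thesis by (rule finite_subset)
qed

lemma good_LPP_finite: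
  assumes "good \<nu> Q"
  shows "\<bar>LPP Q p q\<bar> \<noteq> \<infinity>"
  using LPP_finite[OF good_boxfin[OF assms, of p q]] by auto

lemma calN_props:
  assumes "\<nu> \<in> calN"
  shows "sets \<nu> = sets borel" "\<forall>a b. emeasure \<nu> {a<..b} < \<infinity>"
  using assms by (auto simp: calN_def)

lemma calN_bound:
  assumes "\<nu> \<in> calN"
  shows "\<exists>c>0. \<exists>K. \<forall>y\<le>K. nuF \<nu> y \<le> c * y"
proof -
  have L: "0 < Liminf at_bot (\<lambda>y. ereal (nuF \<nu> y / y))" using assms by (auto simp: calN_def)
  obtain c where c: "0 < ereal c" "ereal c < Liminf at_bot (\<lambda>y. ereal (nuF \<nu> y / y))"
    using ereal_dense2[OF L] by blast
  have "eventually (\<lambda>y. ereal c < ereal (nuF \<nu> y / y)) at_bot" by (rule less_LiminfD[OF c(2)])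
  then obtain N where N: "\<And>y. y \<le> N \<Longrightarrow> c < nuF \<nu> y / y"
    unfolding eventually_at_bot_linorder by auto
  show ?thesis
  proof (intro exI conjI allI impI)
    show "0 < c" using c by simp
    fix y assume y: "y \<le> min N (-1)"
    then have "c < nuF \<nu> y / y" "y < 0" using N by auto
    then show "nuF \<nu> y \<le> c * y" by (simp add: neg_less_divide_eq)
  qed
qed

lemma Lnu_ge: "z \<le> x \<Longrightarrow> ereal (nuF \<nu> z) + LPP Q (z,0) (x,t) \<le> Lnu Q \<nu> x t"
  unfolding Lnu_def by (rule SUP_upper) simp

lemma Lnu_lower: "ereal (nuF \<nu> x) \<le> Lnu Q \<nu> x t"
proof -
  have "ereal (nuF \<nu> x) \<le> ereal (nuF \<nu> x) + LPP Q (x,0) (x,t)"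
    using LPP_nonneg[of Q "(x,0)" "(x,t)"] by (simp add: add_increasing2)
  also have "\<dots> \<le> Lnu Q \<nu> x t" by (rule Lnu_ge) simp
  finally show ?thesis .
qed

lemma Lnu_upper:
  assumes N: "\<nu> \<in> calN" and G: "good \<nu> Q"
  shows "Lnu Q \<nu> x t < \<infinity>"
proof -
  note S = calN_props[OF N]
  obtain c K where c: "0 < c" and K: "\<And>y. y \<le> K \<Longrightarrow> nuF \<nu> y \<le> c * y"
    using calN_bound[OF N] by blast
  obtain T :: nat where T: "t \<le> real T" using real_arch_simple by blast
  obtain R where R: "\<And>r. r \<ge> R \<Longrightarrow> LPP Q (-r,0) (r, real T) \<le> ereal (c/2*r)"
    using G c unfolding good_def by (meson half_gt_zero)
  define D where "D = max (max R \<bar>x\<bar>) (- K) + 1"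
  have fin: "\<bar>LPP Q (-D,0) (x,t)\<bar> \<noteq> \<infinity>" by (rule good_LPP_finite[OF G])
  define B where "B = max 0 (ereal (nuF \<nu> x) + LPP Q (-D,0) (x,t))"
  have "Lnu Q \<nu> x t \<le> B"
    unfolding Lnu_def
  proof (rule SUP_least)
    fix z assume z: "z \<in> {..x}"
    show "ereal (nuF \<nu> z) + LPP Q (z, 0) (x, t) \<le> B"
    proof (cases "z \<le> - D")
      case True
      have "LPP Q (z,0) (x,t) \<le> LPP Q (-\<bar>z\<bar>,0) (\<bar>z\<bar>, real T)"
        by (rule LPP_mono) (use True T D_def in auto)
      also have "\<dots> \<le> ereal (c/2*\<bar>z\<bar>)" by (rule R) (use True D_def in auto)
      finally have "ereal (nuF \<nu> z) + LPP Q (z,0) (x,t) \<le> ereal (nuF \<nu> z) + ereal (c/2*\<bar>z\<bar>)"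
        by (rule add_left_mono)
      also have "\<dots> \<le> 0"
      proof -
        have "nuF \<nu> z \<le> c * z" by (rule K) (use True D_def in auto)
        moreover have "z < 0" using True D_def by auto
        ultimately have "nuF \<nu> z + c/2*\<bar>z\<bar> \<le> 0" using c mult_pos_neg[OF c, of z] by (simp add: abs_if algebra_simps)
        then show ?thesis by simp
      qed
      also have "\<dots> \<le> B" unfolding B_def by simp
      finally show ?thesis .
    next
      case False
      have "nuF \<nu> z \<le> nuF \<nu> x" using nuF_mono[OF S] z by auto
      moreover have "LPP Q (z,0) (x,t) \<le> LPP Q (-D,0) (x,t)" by (rule LPP_mono) (use False in auto)
      ultimately have "ereal (nuF \<nu> z) + LPP Q (z,0) (x,t) \<le> ereal (nuF \<nu> x) + LPP Q (-D,0) (x,t)"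
        by (intro add_mono) auto
      also have "\<dots> \<le> B" unfolding B_def by simp
      finally show ?thesis .
    qed
  qed
  also have "B < \<infinity>"
  proof -
    obtain r where r: "LPP Q (-D,0) (x,t) = ereal r" using fin by (cases "LPP Q (-D,0) (x,t)") auto
    show ?thesis unfolding B_def r by (simp add: max_def zero_ereal_def)
  qed
  finally show ?thesis .
qed

lemma Lnu_finite:
  assumes "\<nu> \<in> calN" "good \<nu> Q"
  shows "\<bar>Lnu Q \<nu> x t\<bar> \<noteq> \<infinity>"
  using Lnu_upper[OF assms, of x t] Lnu_lower[of \<nu> x Q t] by auto

lemma Lnu_mono:
  assumes "x \<le> y"
  shows "Lnu Q \<nu> x t \<le> Lnu Q \<nu> y t"
  unfolding Lnu_def
proof (rule SUP_least)
  fix z assume z: "z \<in> {..x}"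
  have "ereal (nuF \<nu> z) + LPP Q (z,0) (x,t) \<le> ereal (nuF \<nu> z) + LPP Q (z,0) (y,t)"
    by (intro add_left_mono LPP_mono) (use assms in auto)
  also have "\<dots> \<le> (SUP z\<in>{..y}. ereal (nuF \<nu> z) + LPP Q (z,0) (y,t))"
    by (rule SUP_upper) (use z assms in auto)
  finally show "ereal (nuF \<nu> z) + LPP Q (z,0) (x,t) \<le> (SUP z\<in>{..y}. ereal (nuF \<nu> z) + LPP Q (z,0) (y,t))" .
qed

definition Phi :: "mconf \<Rightarrow> real measure \<Rightarrow> real \<Rightarrow> real \<Rightarrow> real" where
  "Phi Q \<nu> t x = real_of_ereal (Lnu Q \<nu> x t)"

lemma Lnu_Phi:
  assumes "\<nu> \<in> calN" "good \<nu> Q"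
  shows "Lnu Q \<nu> x t = ereal (Phi Q \<nu> t x)"
  unfolding Phi_def using Lnu_finite[OF assms, of x t] by (simp add: ereal_real')

lemma Phi_mono:
  assumes "\<nu> \<in> calN" "good \<nu> Q" "x \<le> y"
  shows "Phi Q \<nu> t x \<le> Phi Q \<nu> t y"
  using Lnu_mono[OF assms(3), of Q \<nu> t] unfolding Lnu_Phi[OF assms(1,2)] by simp

lemma nuF_le_Phi:
  assumes "\<nu> \<in> calN" "good \<nu> Q"
  shows "nuF \<nu> x \<le> Phi Q \<nu> t x"
  using Lnu_lower[of \<nu> x Q t] unfolding Lnu_Phi[OF assms] by simp

lemma Lnu_right_local:
  assumes N: "\<nu> \<in> calN" and G: "good \<nu> Q"
  shows "\<exists>\<delta>>0. \<forall>y. x < y \<and> y < x + \<delta> \<longrightarrow> Lnu Q \<nu> y t = max (Lnu Q \<nu> x t) (ereal (nuF \<nu> y))"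
proof -
  note S = calN_props[OF N]
  define BS where "BS = boxset Q (x,0) (x+1,t)"
  have finBS: "finite BS" unfolding BS_def by (rule good_boxfin[OF G])
  define \<delta> where "\<delta> = (if BS = {} then 1 else min 1 (Min ((\<lambda>a. fst (fst a) - x) ` BS)))"
  have pos: "\<forall>a\<in>BS. 0 < fst (fst a) - x" unfolding BS_def boxset_def inbox_def by auto
  have dpos: "0 < \<delta>" unfolding \<delta>_def using finBS pos by auto
  have dle: "\<delta> \<le> fst (fst a) - x" if "a \<in> BS" for a
  proof -
    have "BS \<noteq> {}" using that by auto
    then have "\<delta> = min 1 (Min ((\<lambda>a. fst (fst a) - x) ` BS))" unfolding \<delta>_def by simp
    also have "\<dots> \<le> Min ((\<lambda>a. fst (fst a) - x) ` BS)" by simp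
    also have "\<dots> \<le> fst (fst a) - x" using finBS that by (intro Min_le) auto
    finally show ?thesis .
  qed
  have d1: "\<delta> \<le> 1" unfolding \<delta>_def by auto
  show ?thesis
  proof (intro exI[of _ \<delta>] conjI allI impI dpos)
    fix y assume y: "x < y \<and> y < x + \<delta>"
    have empty: "boxset Q (x,0) (y,t) = {}"
    proof (rule ccontr)
      assume "boxset Q (x,0) (y,t) \<noteq> {}"
      then obtain a where a: "a \<in> Q" "inbox (x,0) (y,t) a" unfolding boxset_def by auto
      then have "a \<in> BS" using y d1 unfolding BS_def boxset_def inbox_def by auto
      then have "\<delta> \<le> fst (fst a) - x" by (rule dle)
      moreover have "fst (fst a) \<le> y" using a(2) unfolding inbox_def by simp
      ultimately show False using y by simp
    qed
    have eq1: "LPP Q (z,0) (y,t) = LPP Q (z,0) (x,t)" if "z \<le> x" for z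
    proof (rule LPP_eq_boxset)
      show "boxset Q (z,0) (y,t) = boxset Q (z,0) (x,t)"
      proof (rule set_eqI, rule iffI)
        fix a assume a: "a \<in> boxset Q (z,0) (y,t)"
        show "a \<in> boxset Q (z,0) (x,t)"
        proof (cases "fst (fst a) \<le> x")
          case True then show ?thesis using a by (auto simp: boxset_def inbox_def)
        next
          case False
          then have "a \<in> boxset Q (x,0) (y,t)" using a by (auto simp: boxset_def inbox_def)
          then show ?thesis using empty by simp
        qed
      next
        fix a assume "a \<in> boxset Q (z,0) (x,t)"
        then show "a \<in> boxset Q (z,0) (y,t)" using y by (auto simp: boxset_def inbox_def)
      qed
    qed
    have eq2: "LPP Q (z,0) (y,t) = 0" if "x < z" for z
    proof (rule LPP_empty_box)
      have "boxset Q (z,0) (y,t) \<subseteq> boxset Q (x,0) (y,t)" by (rule boxset_mono) (use that in auto)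
      then show "boxset Q (z,0) (y,t) = {}" using empty by simp
    qed
    show "Lnu Q \<nu> y t = max (Lnu Q \<nu> x t) (ereal (nuF \<nu> y))"
    proof (rule antisym)
      show "Lnu Q \<nu> y t \<le> max (Lnu Q \<nu> x t) (ereal (nuF \<nu> y))"
        unfolding Lnu_def[of Q \<nu> y t]
      proof (rule SUP_least)
        fix z assume z: "z \<in> {..y}"
        show "ereal (nuF \<nu> z) + LPP Q (z,0) (y,t) \<le> max (Lnu Q \<nu> x t) (ereal (nuF \<nu> y))"
        proof (cases "z \<le> x")
          case True
          then have "ereal (nuF \<nu> z) + LPP Q (z,0) (y,t) \<le> Lnu Q \<nu> x t"
            using eq1[OF True] Lnu_ge[OF True, of \<nu> Q t] by simp
          then show ?thesis by (simp add: le_max_iff_disj)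
        next
          case False
          then have "ereal (nuF \<nu> z) + LPP Q (z,0) (y,t) = ereal (nuF \<nu> z)" using eq2 by simp
          also have "\<dots> \<le> ereal (nuF \<nu> y)" using nuF_mono[OF S, of z y] z by simp
          finally show ?thesis by (simp add: le_max_iff_disj)
        qed
      qed
      show "max (Lnu Q \<nu> x t) (ereal (nuF \<nu> y)) \<le> Lnu Q \<nu> y t"
        using Lnu_mono[of x y Q \<nu> t] Lnu_lower[of \<nu> y Q t] y by simp
    qed
  qed
qed

lemma Phi_right_cont:
  assumes N: "\<nu> \<in> calN" and G: "good \<nu> Q"
  shows "continuous (at_right x) (Phi Q \<nu> t)"
proof -
  note S = calN_props[OF N]
  obtain \<delta> where d: "0 < \<delta>" "\<And>y. x < y \<Longrightarrow> y < x + \<delta> \<Longrightarrow> Lnu Q \<nu> y t = max (Lnu Q \<nu> x t) (ereal (nuF \<nu> y))"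
    using Lnu_right_local[OF N G, of x t] by blast
  have ev: "eventually (\<lambda>y. max (Phi Q \<nu> t x) (nuF \<nu> y) = Phi Q \<nu> t y) (at_right x)"
    unfolding eventually_at_right_field
  proof (intro exI[of _ "x + \<delta>"] conjI allI impI)
    show "x < x + \<delta>" using d by simp
    fix y assume "x < y" "y < x + \<delta>"
    then have "Lnu Q \<nu> y t = max (Lnu Q \<nu> x t) (ereal (nuF \<nu> y))" by (rule d(2))
    then have "ereal (Phi Q \<nu> t y) = max (ereal (Phi Q \<nu> t x)) (ereal (nuF \<nu> y))"
      unfolding Lnu_Phi[OF N G] .
    then show "max (Phi Q \<nu> t x) (nuF \<nu> y) = Phi Q \<nu> t y" by (simp add: max_def split: if_splits)
  qed
  have "((\<lambda>y. max (Phi Q \<nu> t x) (nuF \<nu> y)) \<longlongrightarrow> max (Phi Q \<nu> t x) (nuF \<nu> x)) (at_right x)"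
    using nuF_right_cont[OF S, of x] unfolding continuous_within by (intro tendsto_max tendsto_const)
  moreover have "max (Phi Q \<nu> t x) (nuF \<nu> x) = Phi Q \<nu> t x" using nuF_le_Phi[OF N G, of x t] by simp
  ultimately have "((\<lambda>y. max (Phi Q \<nu> t x) (nuF \<nu> y)) \<longlongrightarrow> Phi Q \<nu> t x) (at_right x)" by simp
  then have "(Phi Q \<nu> t \<longlongrightarrow> Phi Q \<nu> t x) (at_right x)" by (rule Lim_transform_eventually[OF _ ev])
  then show ?thesis unfolding continuous_within .
qed

lemma is_M_interval:
  assumes N: "\<nu> \<in> calN" and G: "good \<nu> Q"
  shows "is_M Q \<nu> t (interval_measure (Phi Q \<nu> t))"
proof -
  have mono: "\<And>x y. x \<le> y \<Longrightarrow> Phi Q \<nu> t x \<le> Phi Q \<nu> t y" by (rule Phi_mono[OF N G])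
  have rc: "\<And>a. continuous (at_right a) (Phi Q \<nu> t)" by (rule Phi_right_cont[OF N G])
  show ?thesis unfolding is_M_def
  proof (intro conjI allI impI)
    show "sets (interval_measure (Phi Q \<nu> t)) = sets borel" by simp
    fix a b :: real
    show "emeasure (interval_measure (Phi Q \<nu> t)) {a<..b} < \<infinity>"
      by (simp add: emeasure_interval_measure_Ioc_eq[OF mono rc])
  next
    fix x y :: real assume xy: "x \<le> y"
    have "measure (interval_measure (Phi Q \<nu> t)) {x<..y} = Phi Q \<nu> t y - Phi Q \<nu> t x"
      by (rule measure_interval_measure_Ioc[OF xy mono rc])
    then show "ereal (measure (interval_measure (Phi Q \<nu> t)) {x<..y}) = Lnu Q \<nu> y t - Lnu Q \<nu> x t"
      unfolding Lnu_Phi[OF N G] by simp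
  qed
qed

lemma sets_borel_Ioc: "sets (borel :: real measure) = sigma_sets UNIV (range (\<lambda>(a, b). {a <.. b::real}))"
  by (subst borel_sigma_sets_Ioc) (rule sets_measure_of, simp)

lemma is_M_unique:
  assumes m1: "is_M Q \<nu> t m1" and m2: "is_M Q \<nu> t m2"
  shows "m1 = m2"
proof -
  let ?E = "range (\<lambda>(a, b). {a <.. b::real})"
  have eqIoc: "emeasure m1 {a<..b} = emeasure m2 {a<..b}" for a b
  proof (cases "a \<le> b")
    case True
    have "ereal (measure m1 {a<..b}) = ereal (measure m2 {a<..b})"
      using m1 m2 True unfolding is_M_def by simp
    then have "measure m1 {a<..b} = measure m2 {a<..b}" by simp
    moreover have "emeasure m1 {a<..b} = ennreal (measure m1 {a<..b})"
      using m1 unfolding is_M_def by (intro emeasure_eq_ennreal_measure) (auto simp: less_top)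
    moreover have "emeasure m2 {a<..b} = ennreal (measure m2 {a<..b})"
      using m2 unfolding is_M_def by (intro emeasure_eq_ennreal_measure) (auto simp: less_top)
    ultimately show ?thesis by simp
  next
    case False then show ?thesis by simp
  qed
  show ?thesis
  proof (rule measure_eqI_generator_eq[where E="?E" and \<Omega>=UNIV and A="\<lambda>i. {- real i<..real i}"])
    show "Int_stable ?E" unfolding Int_stable_def by (auto simp: image_iff)
    show "?E \<subseteq> Pow UNIV" by simp
    show "\<And>X. X \<in> ?E \<Longrightarrow> emeasure m1 X = emeasure m2 X" using eqIoc by auto
    show "sets m1 = sigma_sets UNIV ?E" using m1 sets_borel_Ioc unfolding is_M_def by simp
    show "sets m2 = sigma_sets UNIV ?E" using m2 sets_borel_Ioc unfolding is_M_def by simp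
    show "range (\<lambda>i. {- real i<..real i}) \<subseteq> ?E" by auto
    show "(\<Union>i. {- real i<..real i}) = UNIV"
    proof (rule set_eqI, rule iffI)
      fix x :: real
      obtain n :: nat where "\<bar>x\<bar> \<le> real n" using real_arch_simple by blast
      then show "x \<in> (\<Union>i. {- real i<..real i})" by (intro UN_I[of "n+1"]) auto
    qed simp
    show "\<And>i. emeasure m1 {- real i<..real i} \<noteq> \<infinity>" using m1 unfolding is_M_def by (auto simp: less_top)
  qed
qed

lemma Mt_eq:
  assumes "is_M Q \<nu> t m"
  shows "Mt Q \<nu> t = m"
  unfolding Mt_def using assms is_M_unique by blast

lemma Mt_is_M:
  assumes N: "\<nu> \<in> calN" and G: "good \<nu> Q"
  shows "is_M Q \<nu> t (Mt Q \<nu> t)"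
  using is_M_interval[OF N G, of t] Mt_eq[OF is_M_interval[OF N G, of t]] by simp

lemma Lnu_t0:
  assumes N: "\<nu> \<in> calN"
  shows "Lnu Q \<nu> x 0 = ereal (nuF \<nu> x)"
proof (rule antisym)
  note S = calN_props[OF N]
  show "Lnu Q \<nu> x 0 \<le> ereal (nuF \<nu> x)"
    unfolding Lnu_def
  proof (rule SUP_least)
    fix z assume "z \<in> {..x}"
    then show "ereal (nuF \<nu> z) + LPP Q (z, 0) (x, 0) \<le> ereal (nuF \<nu> x)"
      using LPP_t0[of "(x,0)" "(z,0)" Q] nuF_mono[OF S, of z x] by simp
  qed
  show "ereal (nuF \<nu> x) \<le> Lnu Q \<nu> x 0" by (rule Lnu_lower)
qed

lemma Mt_0:
  assumes N: "\<nu> \<in> calN"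
  shows "Mt Q \<nu> 0 = \<nu>"
proof (rule Mt_eq)
  note S = calN_props[OF N]
  show "is_M Q \<nu> 0 \<nu>"
    unfolding is_M_def using S nuF_diff[OF S] by (simp add: Lnu_t0[OF N])
qed


lemma Ioc_shrink_lim:
  fixes M :: "real measure"
  assumes S: "sets M = sets borel" and fin: "\<forall>a b. emeasure M {a<..b} < \<infinity>"
  shows "(\<lambda>n. measure M {x0 - 1 / real (Suc n)<..x0}) \<longlonglongrightarrow> measure M {x0}"
proof -
  let ?f = "\<lambda>n::nat. x0 - 1 / real (Suc n)"
  have "(\<lambda>n. measure M {?f n<..x0}) \<longlonglongrightarrow> measure M (\<Inter>i. {?f i<..x0})"
  proof (rule Lim_measure_decseq)
    show "range (\<lambda>i. {?f i<..x0}) \<subseteq> sets M" unfolding S by (intro image_subsetI greaterThanAtMost_borel)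
    show "decseq (\<lambda>i. {?f i<..x0})"
    proof (rule decseq_SucI)
      fix n :: nat
      have "1 / real (Suc (Suc n)) \<le> 1 / real (Suc n)" by (rule frac_le) auto
      then show "{?f (Suc n)<..x0} \<subseteq> {?f n<..x0}" by auto
    qed
    show "emeasure M {?f i<..x0} \<noteq> \<infinity>" for i using fin by (auto simp: less_top)
  qed
  also have "(\<Inter>i. {?f i<..x0}) = {x0}"
  proof -
    { fix x assume x: "x \<in> (\<Inter>i. {?f i<..x0})"
      have "x = x0"
      proof (rule ccontr)
        assume "x \<noteq> x0" with x have "x < x0" by auto
        then have "0 < x0 - x" by simp
        then obtain n :: nat where n: "1 / real (Suc n) < x0 - x"
          by (rule nat_approx_posE)
        moreover from x have "x \<in> {?f n<..x0}" by blast
        ultimately show False by simp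
      qed }
    then show ?thesis by auto
  qed
  finally show ?thesis .
qed

lemma Ioo_grow_lim:
  fixes M :: "real measure"
  assumes S: "sets M = sets borel"
  shows "(\<lambda>n. emeasure M {a<..x0 - 1 / real (Suc n)}) \<longlonglongrightarrow> emeasure M {a<..<x0}"
proof -
  let ?f = "\<lambda>n::nat. x0 - 1 / real (Suc n)"
  have "(\<lambda>n. emeasure M {a<..?f n}) \<longlonglongrightarrow> emeasure M (\<Union>i. {a<..?f i})"
  proof (rule Lim_emeasure_incseq)
    show "range (\<lambda>i. {a<..?f i}) \<subseteq> sets M" unfolding S by (intro image_subsetI greaterThanAtMost_borel)
    show "incseq (\<lambda>i. {a<..?f i})"
    proof (rule incseq_SucI)
      fix n :: nat
      have "1 / real (Suc (Suc n)) \<le> 1 / real (Suc n)" by (rule frac_le) auto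
      then show "{a<..?f n} \<subseteq> {a<..?f (Suc n)}" by auto
    qed
  qed
  also have "(\<Union>i. {a<..?f i}) = {a<..<x0}"
  proof (rule set_eqI, rule iffI)
    fix x assume "x \<in> (\<Union>i. {a<..?f i})"
    then obtain i where "x \<in> {a<..?f i}" by blast
    then have h: "a < x" "x \<le> x0 - 1 / real (Suc i)" unfolding greaterThanAtMost_iff by auto
    have "0 < 1 / real (Suc i)" by simp
    with h have "a < x" "x < x0" by linarith+
    then show "x \<in> {a<..<x0}" by simp
  next
    fix x assume x: "x \<in> {a<..<x0}"
    then have "0 < x0 - x" by simp
    then obtain n :: nat where n: "1 / real (Suc n) < x0 - x" by (rule nat_approx_posE)
    then show "x \<in> (\<Union>i. {a<..?f i})" using x by (intro UN_I[of n]) auto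
  qed
  finally show ?thesis .
qed

lemma measure_agree_left:
  fixes m1 m2 :: "real measure"
  assumes S1: "sets m1 = sets borel" and S2: "sets m2 = sets borel"
    and F1: "\<forall>a b. emeasure m1 {a<..b} < \<infinity>"
    and eq: "\<And>a b. b < x0 \<Longrightarrow> emeasure m1 {a<..b} = emeasure m2 {a<..b}"
    and A: "A \<in> sets borel" "A \<subseteq> {..<x0}"
  shows "emeasure m1 A = emeasure m2 A"
proof -
  let ?I = "indicator {..<x0} :: real \<Rightarrow> ennreal"
  define N1 where "N1 = density m1 ?I"
  define N2 where "N2 = density m2 ?I"
  have dens: "emeasure (density m ?I) X = emeasure m (X \<inter> {..<x0})"
    if Sm: "sets m = sets borel" and X: "X \<in> sets borel" for m :: "real measure" and X
  proof -
    have meas: "?I \<in> borel_measurable m" by (rule borel_measurable_indicator) (simp add: Sm)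
    have "emeasure (density m ?I) X = (\<integral>\<^sup>+ x. ?I x * indicator X x \<partial>m)"
      by (rule emeasure_density[OF meas]) (simp add: Sm X)
    also have "\<dots> = (\<integral>\<^sup>+ x. indicator (X \<inter> {..<x0}) x \<partial>m)"
      by (rule nn_integral_cong) (simp split: split_indicator)
    also have "\<dots> = emeasure m (X \<inter> {..<x0})" by (rule nn_integral_indicator) (use Sm X in auto)
    finally show ?thesis .
  qed
  have eqIoc: "emeasure N1 {a<..b} = emeasure N2 {a<..b}" for a b
  proof -
    have "emeasure N1 {a<..b} = emeasure m1 ({a<..b} \<inter> {..<x0})" unfolding N1_def by (rule dens[OF S1]) simp
    moreover have "emeasure N2 {a<..b} = emeasure m2 ({a<..b} \<inter> {..<x0})" unfolding N2_def by (rule dens[OF S2]) simp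
    moreover have "emeasure m1 ({a<..b} \<inter> {..<x0}) = emeasure m2 ({a<..b} \<inter> {..<x0})"
    proof (cases "b < x0")
      case True
      then have "{a<..b} \<inter> {..<x0} = {a<..b}" by auto
      then show ?thesis using eq[OF True] by simp
    next
      case False
      then have e: "{a<..b} \<inter> {..<x0} = {a<..<x0}" by auto
      have "(\<lambda>n. emeasure m1 {a<..x0 - 1 / real (Suc n)}) = (\<lambda>n. emeasure m2 {a<..x0 - 1 / real (Suc n)})"
        by (rule ext, rule eq) simp
      then have "emeasure m1 {a<..<x0} = emeasure m2 {a<..<x0}"
        using Ioo_grow_lim[OF S1, of a x0] Ioo_grow_lim[OF S2, of a x0] LIMSEQ_unique by metis
      then show ?thesis unfolding e .
    qed
    ultimately show ?thesis by simp
  qed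
  let ?E = "range (\<lambda>(a, b). {a <.. b::real})"
  have "N1 = N2"
  proof (rule measure_eqI_generator_eq[where E="?E" and \<Omega>=UNIV and A="\<lambda>i. {- real i<..real i}"])
    show "Int_stable ?E" unfolding Int_stable_def by (auto simp: image_iff)
    show "?E \<subseteq> Pow UNIV" by simp
    show "\<And>X. X \<in> ?E \<Longrightarrow> emeasure N1 X = emeasure N2 X" using eqIoc by auto
    show "sets N1 = sigma_sets UNIV ?E" using S1 sets_borel_Ioc unfolding N1_def by simp
    show "sets N2 = sigma_sets UNIV ?E" using S2 sets_borel_Ioc unfolding N2_def by simp
    show "range (\<lambda>i. {- real i<..real i}) \<subseteq> ?E" by auto
    show "(\<Union>i. {- real i<..real i}) = UNIV"
    proof (rule set_eqI, rule iffI)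
      fix x :: real
      obtain n :: nat where "\<bar>x\<bar> \<le> real n" using real_arch_simple by blast
      then show "x \<in> (\<Union>i. {- real i<..real i})" by (intro UN_I[of "n+1"]) auto
    qed simp
    fix i :: nat
    have "emeasure N1 {- real i<..real i} = emeasure m1 ({- real i<..real i} \<inter> {..<x0})"
      unfolding N1_def by (rule dens[OF S1]) simp
    also have "\<dots> \<le> emeasure m1 {- real i<..real i}" by (rule emeasure_mono) (auto simp: S1)
    also have "\<dots> < \<infinity>" using F1 by auto
    finally show "emeasure N1 {- real i<..real i} \<noteq> \<infinity>" by simp
  qed
  have "emeasure m1 A = emeasure N1 A" unfolding N1_def using dens[OF S1 A(1)] A(2) by (simp add: Int_absorb2)
  also have "\<dots> = emeasure N2 A" using \<open>N1 = N2\<close> by simp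
  also have "\<dots> = emeasure m2 A" unfolding N2_def using dens[OF S2 A(1)] A(2) by (simp add: Int_absorb2)
  finally show ?thesis .
qed

context
  fixes \<nu> Q x0 t0 w
  assumes N: "\<nu> \<in> calN" and G: "good \<nu> Q" and p: "((x0,t0),w) \<in> Q" and t0: "0 < t0"
begin

abbreviation "Q0 \<equiv> Q - {((x0,t0),w)}"

lemma G0: "good \<nu> Q0" by (rule good_subset[OF G]) auto

lemma wpos: "0 < w" using G p unfolding good_def by auto

lemma dist0: "\<forall>a\<in>Q0. 0 < snd (fst a) \<longrightarrow> fst (fst a) \<noteq> x0 \<and> snd (fst a) \<noteq> t0"
proof (intro ballI impI)
  fix a assume a: "a \<in> Q0" "0 < snd (fst a)"
  have "\<forall>a\<in>Q. \<forall>b\<in>Q. 0 < snd (fst a) \<longrightarrow> 0 < snd (fst b) \<longrightarrow> a \<noteq> b \<longrightarrow>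
        fst (fst a) \<noteq> fst (fst b) \<and> snd (fst a) \<noteq> snd (fst b)" using G unfolding good_def by blast
  then show "fst (fst a) \<noteq> x0 \<and> snd (fst a) \<noteq> t0" using a p t0 by force
qed

lemma atom0: "emeasure \<nu> {x0} = 0" using G p t0 unfolding good_def by force

lemma Lnu_left_eq:
  assumes "x < x0"
  shows "Lnu Q \<nu> x t0 = Lnu Q0 \<nu> x t0"
  unfolding Lnu_def
proof (rule SUP_cong[OF refl])
  fix z assume "z \<in> {..x}"
  have "boxset Q (z,0) (x,t0) = boxset Q0 (z,0) (x,t0)"
    using assms unfolding boxset_def inbox_def by auto
  then show "ereal (nuF \<nu> z) + LPP Q (z,0) (x,t0) = ereal (nuF \<nu> z) + LPP Q0 (z,0) (x,t0)"
    using LPP_eq_boxset by metis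
qed

definition aa where "aa = (SUP z\<in>{..<x0}. ereal (nuF \<nu> z) + LPP Q0 (z,0) (x0,t0))"

lemma aa_ge: "z < x0 \<Longrightarrow> ereal (nuF \<nu> z) \<le> aa"
proof -
  assume z: "z < x0"
  have "ereal (nuF \<nu> z) \<le> ereal (nuF \<nu> z) + LPP Q0 (z,0) (x0,t0)"
    using LPP_nonneg[of Q0 "(z,0)" "(x0,t0)"] by (simp add: add_increasing2)
  also have "\<dots> \<le> aa" unfolding aa_def by (rule SUP_upper) (use z in auto)
  finally show ?thesis .
qed

lemma nuF_le_aa: "ereal (nuF \<nu> x0) \<le> aa"
proof (rule ccontr)
  note S = calN_props[OF N]
  assume "\<not> ereal (nuF \<nu> x0) \<le> aa"
  then have lt: "aa < ereal (nuF \<nu> x0)" by simp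
  have lo: "ereal (nuF \<nu> (x0 - 1)) \<le> aa" by (rule aa_ge) simp
  obtain r where r: "aa = ereal r" using lt lo by (cases aa) auto
  have "0 < nuF \<nu> x0 - r" using lt r by simp
  then obtain z where z: "z < x0" "nuF \<nu> x0 - (nuF \<nu> x0 - r) < nuF \<nu> z"
    using nuF_left_nonatom[OF S atom0] by blast
  have "ereal (nuF \<nu> z) \<le> aa" by (rule aa_ge[OF z(1)])
  then show False using z(2) r by simp
qed

lemma Lnu0_x0: "Lnu Q0 \<nu> x0 t0 = aa"
proof (rule antisym)
  show "Lnu Q0 \<nu> x0 t0 \<le> aa"
    unfolding Lnu_def
  proof (rule SUP_least)
    fix z assume z: "z \<in> {..x0}"
    show "ereal (nuF \<nu> z) + LPP Q0 (z,0) (x0,t0) \<le> aa"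
    proof (cases "z < x0")
      case True then show ?thesis unfolding aa_def by (intro SUP_upper) auto
    next
      case False
      then have "z = x0" using z by auto
      moreover have "LPP Q0 (x0,0) (x0,t0) = 0" by (rule LPP_empty_box) (auto simp: boxset_def inbox_def)
      ultimately show ?thesis using nuF_le_aa by simp
    qed
  qed
  show "aa \<le> Lnu Q0 \<nu> x0 t0"
    unfolding aa_def Lnu_def by (rule SUP_subset_mono) auto
qed

lemma Lnu_right_eq:
  assumes x: "x0 \<le> x"
  shows "Lnu Q \<nu> x t0 = max (Lnu Q0 \<nu> x t0) (Lnu Q0 \<nu> x0 t0 + ereal w)"
proof -
  have QQ: "Q = insert ((x0,t0),w) Q0" using p by auto
  have pn: "((x0,t0),w) \<notin> Q0" by simp
  have upd: "LPP Q (z,0) (x,t0) = max (LPP Q0 (z,0) (x,t0)) (LPP Q0 (z,0) (x0,t0) + ereal w)" if "z < x0" for z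
    by (rule LPP_update[OF QQ pn dist0 that x t0])
  have eqr: "LPP Q (z,0) (x,t0) = LPP Q0 (z,0) (x,t0)" if "x0 \<le> z" for z
  proof (rule LPP_eq_boxset)
    show "boxset Q (z,0) (x,t0) = boxset Q0 (z,0) (x,t0)"
      using that unfolding boxset_def inbox_def by auto
  qed
  show ?thesis unfolding Lnu0_x0
  proof (rule antisym)
    show "Lnu Q \<nu> x t0 \<le> max (Lnu Q0 \<nu> x t0) (aa + ereal w)"
      unfolding Lnu_def[of Q \<nu> x t0]
    proof (rule SUP_least)
      fix z assume z: "z \<in> {..x}"
      show "ereal (nuF \<nu> z) + LPP Q (z,0) (x,t0) \<le> max (Lnu Q0 \<nu> x t0) (aa + ereal w)"
      proof (cases "z < x0")
        case True
        have A: "ereal (nuF \<nu> z) + LPP Q0 (z,0) (x,t0) \<le> Lnu Q0 \<nu> x t0"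
          by (rule Lnu_ge) (use z in auto)
        have "ereal (nuF \<nu> z) + LPP Q0 (z,0) (x0,t0) \<le> aa"
          unfolding aa_def by (rule SUP_upper) (use True in auto)
        then have B: "ereal (nuF \<nu> z) + (LPP Q0 (z,0) (x0,t0) + ereal w) \<le> aa + ereal w"
          by (simp add: add.assoc[symmetric] add_right_mono)
        show ?thesis unfolding upd[OF True]
          using A B by (auto simp: max_def intro: order_trans add_left_mono)
      next
        case False
        then have e: "LPP Q (z,0) (x,t0) = LPP Q0 (z,0) (x,t0)" by (intro eqr) simp
        have "ereal (nuF \<nu> z) + LPP Q0 (z,0) (x,t0) \<le> Lnu Q0 \<nu> x t0"
          by (intro Lnu_ge) (use z in auto)
        then have "ereal (nuF \<nu> z) + LPP Q (z,0) (x,t0) \<le> Lnu Q0 \<nu> x t0" unfolding e .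
        then show ?thesis by (simp add: le_max_iff_disj)
      qed
    qed
    have m1: "Lnu Q0 \<nu> x t0 \<le> Lnu Q \<nu> x t0"
      unfolding Lnu_def by (intro SUP_mono) (auto intro!: add_left_mono LPP_mono)
    have "aa + ereal w = (SUP z\<in>{..<x0}. ereal (nuF \<nu> z) + LPP Q0 (z,0) (x0,t0) + ereal w)"
      unfolding aa_def by (rule SUP_ereal_add_left[symmetric]) auto
    also have "\<dots> \<le> Lnu Q \<nu> x t0"
    proof (rule SUP_least)
      fix z assume z: "z \<in> {..<x0}"
      have "ereal (nuF \<nu> z) + LPP Q0 (z,0) (x0,t0) + ereal w = ereal (nuF \<nu> z) + (LPP Q0 (z,0) (x0,t0) + ereal w)"
        by (simp add: add.assoc)
      also have "\<dots> \<le> ereal (nuF \<nu> z) + LPP Q (z,0) (x,t0)"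
        using z upd[of z] by (intro add_left_mono) simp
      also have "\<dots> \<le> Lnu Q \<nu> x t0" by (rule Lnu_ge) (use z x in auto)
      finally show "ereal (nuF \<nu> z) + LPP Q0 (z,0) (x0,t0) + ereal w \<le> Lnu Q \<nu> x t0" .
    qed
    finally show "max (Lnu Q0 \<nu> x t0) (aa + ereal w) \<le> Lnu Q \<nu> x t0" using m1 by simp
  qed
qed

lemma Phi_left: "x < x0 \<Longrightarrow> Phi Q \<nu> t0 x = Phi Q0 \<nu> t0 x"
  unfolding Phi_def using Lnu_left_eq by simp

lemma Phi_right: "x0 \<le> x \<Longrightarrow> Phi Q \<nu> t0 x = max (Phi Q0 \<nu> t0 x) (Phi Q0 \<nu> t0 x0 + w)"
  using Lnu_right_eq[of x] unfolding Lnu_Phi[OF N G] Lnu_Phi[OF N G0] by (simp add: max_def split: if_splits)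

lemma is_M_measure:
  assumes "good \<nu> Q'" "is_M Q' \<nu> t m" "x \<le> y"
  shows "measure m {x<..y} = Phi Q' \<nu> t y - Phi Q' \<nu> t x"
  using assms(2,3) unfolding is_M_def Lnu_Phi[OF N assms(1)] by simp

lemma is_M_emeasure:
  assumes "is_M Q' \<nu> t m"
  shows "emeasure m {x<..y} = ennreal (measure m {x<..y})"
  using assms unfolding is_M_def by (intro emeasure_eq_ennreal_measure) (auto simp: less_top)

lemma update_measures:
  shows "is_M Q0 \<nu> t0 (Mt Q0 \<nu> t0)"
    and "\<forall>A \<in> sets borel. A \<subseteq> {..<x0} \<longrightarrow> emeasure (Mt Q \<nu> t0) A = emeasure (Mt Q0 \<nu> t0) A"
    and "emeasure (Mt Q \<nu> t0) {x0} = emeasure (Mt Q0 \<nu> t0) {x0} + ennreal w"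
    and "\<forall>x > x0. emeasure (Mt Q \<nu> t0) {x0<..x} = ennreal (max (measure (Mt Q0 \<nu> t0) {x0<..x} - w) 0)"
proof -
  let ?M1 = "Mt Q \<nu> t0" and ?M0 = "Mt Q0 \<nu> t0"
  have I1: "is_M Q \<nu> t0 ?M1" by (rule Mt_is_M[OF N G])
  have I0: "is_M Q0 \<nu> t0 ?M0" by (rule Mt_is_M[OF N G0])
  then show "is_M Q0 \<nu> t0 ?M0" .
  have S1: "sets ?M1 = sets borel" "\<forall>a b. emeasure ?M1 {a<..b} < \<infinity>" using I1 unfolding is_M_def by auto
  have S0: "sets ?M0 = sets borel" "\<forall>a b. emeasure ?M0 {a<..b} < \<infinity>" using I0 unfolding is_M_def by auto
  show "\<forall>A \<in> sets borel. A \<subseteq> {..<x0} \<longrightarrow> emeasure ?M1 A = emeasure ?M0 A"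
  proof (intro ballI impI)
    fix A :: "real set" assume A: "A \<in> sets borel" "A \<subseteq> {..<x0}"
    show "emeasure ?M1 A = emeasure ?M0 A"
    proof (rule measure_agree_left[OF S1(1) S0(1) S1(2) _ A])
      fix a b :: real assume b: "b < x0"
      show "emeasure ?M1 {a<..b} = emeasure ?M0 {a<..b}"
      proof (cases "a \<le> b")
        case True
        have "measure ?M1 {a<..b} = measure ?M0 {a<..b}"
          using is_M_measure[OF G I1 True] is_M_measure[OF G0 I0 True] Phi_left[of a] Phi_left[of b] b True
          by simp
        then show ?thesis using is_M_emeasure[OF I1] is_M_emeasure[OF I0] by metis
      qed simp
    qed
  qed
  let ?f = "\<lambda>n::nat. x0 - 1 / real (Suc n)"
  have fl: "?f n < x0" for n by simp
  have seq: "measure ?M1 {?f n<..x0} = measure ?M0 {?f n<..x0} + w" for n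
  proof -
    have le: "?f n \<le> x0" using fl[of n] by linarith
    show ?thesis
      using is_M_measure[OF G I1 le] is_M_measure[OF G0 I0 le] Phi_left[OF fl[of n]] Phi_right[of x0] wpos
      by simp
  qed
  have L1: "(\<lambda>n. measure ?M1 {?f n<..x0}) \<longlonglongrightarrow> measure ?M1 {x0}" by (rule Ioc_shrink_lim[OF S1])
  have L0: "(\<lambda>n. measure ?M0 {?f n<..x0} + w) \<longlonglongrightarrow> measure ?M0 {x0} + w"
    by (intro tendsto_add Ioc_shrink_lim[OF S0] tendsto_const)
  have mx: "measure ?M1 {x0} = measure ?M0 {x0} + w"
    using L1 L0 unfolding seq by (rule LIMSEQ_unique)
  have fin1: "emeasure M {x0} \<noteq> top" if "sets M = sets borel" "\<forall>a b. emeasure M {a<..b} < \<infinity>" for M :: "real measure"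
  proof -
    have "emeasure M {x0} \<le> emeasure M {x0 - 1<..x0}" by (rule emeasure_mono) (use that in auto)
    also have "\<dots> < \<infinity>" using that by auto
    finally show ?thesis by (simp add: less_top[symmetric])
  qed
  have "emeasure ?M1 {x0} = ennreal (measure ?M1 {x0})" by (rule emeasure_eq_ennreal_measure[OF fin1[OF S1]])
  also have "\<dots> = ennreal (measure ?M0 {x0}) + ennreal w" unfolding mx using wpos by (simp add: ennreal_plus)
  also have "ennreal (measure ?M0 {x0}) = emeasure ?M0 {x0}" by (rule emeasure_eq_ennreal_measure[OF fin1[OF S0], symmetric])
  finally show "emeasure ?M1 {x0} = emeasure ?M0 {x0} + ennreal w" .
  show "\<forall>x > x0. emeasure ?M1 {x0<..x} = ennreal (max (measure ?M0 {x0<..x} - w) 0)"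
  proof (intro allI impI)
    fix x assume x: "x0 < x"
    then have le: "x0 \<le> x" by simp
    have "measure ?M1 {x0<..x} = max (measure ?M0 {x0<..x} - w) 0"
      using is_M_measure[OF G I1 le] is_M_measure[OF G0 I0 le] Phi_right[OF le] Phi_right[of x0] wpos
      by (simp add: max_def)
    then show "emeasure ?M1 {x0<..x} = ennreal (max (measure ?M0 {x0<..x} - w) 0)"
      using is_M_emeasure[OF I1] by simp
  qed
qed

end

lemma det_main:
  assumes N: "\<nu> \<in> calN" and G: "good \<nu> Q"
  shows "(\<forall>x t. 0 \<le> t \<longrightarrow> \<bar>Lnu Q \<nu> x t\<bar> \<noteq> \<infinity>) \<and>
           (\<forall>t\<ge>0. is_M Q \<nu> t (Mt Q \<nu> t)) \<and>
           Mt Q \<nu> 0 = \<nu> \<and>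
           (\<forall>x0 t w. ((x0, t), w) \<in> Q \<and> 0 < t \<longrightarrow>
              (let M1 = Mt Q \<nu> t;
                   Q0 = Q - {((x0, t), w)};
                   M0 = Mt Q0 \<nu> t
               in is_M Q0 \<nu> t M0 \<and>
                  (\<forall>A \<in> sets borel. A \<subseteq> {..<x0} \<longrightarrow> emeasure M1 A = emeasure M0 A) \<and>
                  emeasure M1 {x0} = emeasure M0 {x0} + ennreal w \<and>
                  (\<forall>x > x0. emeasure M1 {x0<..x} = ennreal (max (measure M0 {x0<..x} - w) 0))))"
  unfolding Let_def
proof (intro conjI allI impI)
  fix x t :: real
  show "\<bar>Lnu Q \<nu> x t\<bar> \<noteq> \<infinity>" by (rule Lnu_finite[OF N G])
next
  fix t :: real
  show "is_M Q \<nu> t (Mt Q \<nu> t)" by (rule Mt_is_M[OF N G])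
next
  show "Mt Q \<nu> 0 = \<nu>" by (rule Mt_0[OF N])
next
  fix x0 t w assume a: "((x0, t), w) \<in> Q \<and> 0 < t"
  note U = update_measures[OF N G conjunct1[OF a] conjunct2[OF a]]
  show "is_M (Q - {((x0, t), w)}) \<nu> t (Mt (Q - {((x0, t), w)}) \<nu> t)" by (rule U(1))
  show "\<forall>A\<in>sets borel. A \<subseteq> {..<x0} \<longrightarrow> emeasure (Mt Q \<nu> t) A = emeasure (Mt (Q - {((x0, t), w)}) \<nu> t) A"
    by (rule U(2))
  show "emeasure (Mt Q \<nu> t) {x0} = emeasure (Mt (Q - {((x0, t), w)}) \<nu> t) {x0} + ennreal w" by (rule U(3))
  fix x assume "x0 < x"
  then show "emeasure (Mt Q \<nu> t) {x0<..x} = ennreal (max (measure (Mt (Q - {((x0, t), w)}) \<nu> t) {x0<..x} - w) 0)"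
    using U(4) by blast
qed


locale setting = M: prob_space M + F: prob_space F for M :: "'a measure" and F :: "real measure" +
  fixes Q :: "'a \<Rightarrow> mconf"
  assumes SF: "sets F = sets borel" and F0: "emeasure F {..0} = 0" and mp: "marked_poisson M Q F"
begin

abbreviation "mu \<equiv> (lborel :: (real \<times> real) measure) \<Otimes>\<^sub>M F"

lemma mp_unf:
  assumes "B \<in> sets mu" "emeasure mu B < \<infinity>"
  shows "(AE \<omega> in M. finite (Q \<omega> \<inter> B))"
    "{\<omega> \<in> space M. card (Q \<omega> \<inter> B) = k} \<in> sets M"
    "measure M {\<omega> \<in> space M. card (Q \<omega> \<inter> B) = k} = measure mu B ^ k / fact k * exp (- measure mu B)"
  using mp assms unfolding marked_poisson_def Let_def by blast+

lemma N_ge_meas: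
  assumes "B \<in> sets mu" "emeasure mu B < \<infinity>"
  shows "{\<omega> \<in> space M. j \<le> card (Q \<omega> \<inter> B)} \<in> sets M"
proof -
  have "{\<omega> \<in> space M. j \<le> card (Q \<omega> \<inter> B)} = space M - (\<Union>k\<in>{..<j}. {\<omega> \<in> space M. card (Q \<omega> \<inter> B) = k})"
    by auto
  also have "\<dots> \<in> sets M" using mp_unf(2)[OF assms] by auto
  finally show ?thesis .
qed

lemma N_ge_prob:
  assumes "B \<in> sets mu" "emeasure mu B < \<infinity>"
  shows "measure M {\<omega> \<in> space M. j \<le> card (Q \<omega> \<inter> B)} = 1 - (\<Sum>k<j. measure mu B ^ k / fact k * exp (- measure mu B))"
proof -
  let ?A = "\<lambda>k. {\<omega> \<in> space M. card (Q \<omega> \<inter> B) = k}"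
  have "{\<omega> \<in> space M. j \<le> card (Q \<omega> \<inter> B)} = space M - (\<Union>k\<in>{..<j}. ?A k)" by auto
  moreover have U: "(\<Union>k\<in>{..<j}. ?A k) \<in> sets M" using mp_unf(2)[OF assms] by auto
  moreover have "measure M (\<Union>k\<in>{..<j}. ?A k) = (\<Sum>k<j. measure M (?A k))"
    by (rule measure_finite_Union) (use mp_unf(2)[OF assms] in \<open>auto simp: disjoint_family_on_def\<close>)
  ultimately show ?thesis using M.prob_compl[OF U] mp_unf(3)[OF assms] by simp
qed

lemma poisson_tail:
  fixes m :: real assumes "0 \<le> m"
  shows "1 - (\<Sum>k<j. m ^ k / fact k * exp (- m)) \<le> m ^ j / fact j"
proof -
  obtain t where t: "\<bar>t\<bar> \<le> \<bar>m\<bar>" "exp m = (\<Sum>k<j. m ^ k / fact k) + (exp t / fact j) * m ^ j"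
    using Maclaurin_exp_le[of m j] by blast
  have "(\<Sum>k<j. m ^ k / fact k * exp (- m)) = exp (- m) * (\<Sum>k<j. m ^ k / fact k)"
    by (simp add: sum_distrib_left mult.commute)
  also have "\<dots> = exp (- m) * (exp m - (exp t / fact j) * m ^ j)" using t(2) by simp
  also have "\<dots> = 1 - exp (- m) * exp t * m ^ j / fact j"
    by (simp add: algebra_simps exp_minus_inverse)
  finally have eq: "1 - (\<Sum>k<j. m ^ k / fact k * exp (- m)) = exp (- m) * exp t * m ^ j / fact j" by simp
  have "exp (- m) * exp t \<le> 1"
  proof -
    have "t \<le> m" using t(1) assms by simp
    have "exp (- m) * exp t = exp (t - m)" by (simp add: mult_exp_exp)
    also have "\<dots> \<le> 1" using \<open>t \<le> m\<close> by simp
    finally show ?thesis .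
  qed
  then have "exp (- m) * exp t * m ^ j / fact j \<le> 1 * m ^ j / fact j"
    using assms by (intro divide_right_mono mult_right_mono) auto
  then show ?thesis using eq by simp
qed

lemma N_ge_bound:
  assumes "B \<in> sets mu" "emeasure mu B < \<infinity>"
  shows "measure M {\<omega> \<in> space M. j \<le> card (Q \<omega> \<inter> B)} \<le> measure mu B ^ j / fact j"
  unfolding N_ge_prob[OF assms] by (rule poisson_tail) simp

lemma rect_sets: "({a<..b} \<times> {c<..d} :: (real \<times> real) set) \<in> sets (lborel :: (real \<times> real) measure)"
proof -
  have h: "{a<..b} \<in> sets (borel::real measure)" "{c<..d} \<in> sets (borel::real measure)" by auto
  have "({a<..b} \<times> {c<..d} :: (real \<times> real) set) \<in> sets (borel \<Otimes>\<^sub>M (borel::real measure))"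
    by (rule pair_measureI[OF h])
  then show ?thesis unfolding borel_prod sets_lborel .
qed

lemma lborel_rect:
  assumes "a \<le> b" "c \<le> d"
  shows "emeasure (lborel :: (real \<times> real) measure) ({a<..b} \<times> {c<..d}) = ennreal ((b - a) * (d - c))"
proof -
  have "emeasure (lborel :: (real \<times> real) measure) ({a<..b} \<times> {c<..d}) =
        emeasure (lborel \<Otimes>\<^sub>M lborel) ({a<..b} \<times> {c<..d})" by (simp add: lborel_prod)
  also have "\<dots> = emeasure lborel {a<..b} * emeasure lborel {c<..d}"
    by (rule sigma_finite_measure.emeasure_pair_measure_Times[OF sigma_finite_lborel]) auto
  also have "\<dots> = ennreal ((b - a) * (d - c))" using assms by (simp add: ennreal_mult)
  finally show ?thesis .
qed

lemma mu_times:
  assumes "A \<in> sets (lborel :: (real \<times> real) measure)" "S \<in> sets borel"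
  shows "A \<times> S \<in> sets mu" "emeasure mu (A \<times> S) = emeasure lborel A * emeasure F S"
  using assms by (auto intro!: pair_measureI F.emeasure_pair_measure_Times simp: SF)

lemma mu_rect:
  assumes "a \<le> b" "c \<le> d" "S \<in> sets borel"
  shows "({a<..b} \<times> {c<..d}) \<times> S \<in> sets mu"
    "emeasure mu (({a<..b} \<times> {c<..d}) \<times> S) = ennreal ((b - a) * (d - c) * measure F S)"
    "measure mu (({a<..b} \<times> {c<..d}) \<times> S) = (b - a) * (d - c) * measure F S"
proof -
  show "({a<..b} \<times> {c<..d}) \<times> S \<in> sets mu" by (rule mu_times(1)[OF rect_sets assms(3)])
  have "emeasure mu (({a<..b} \<times> {c<..d}) \<times> S) = ennreal ((b - a) * (d - c)) * emeasure F S"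
    using mu_times(2)[OF rect_sets assms(3)] lborel_rect[OF assms(1,2)] by simp
  also have "\<dots> = ennreal ((b - a) * (d - c) * measure F S)"
    using assms by (simp add: F.emeasure_eq_measure ennreal_mult)
  finally show e: "emeasure mu (({a<..b} \<times> {c<..d}) \<times> S) = ennreal ((b - a) * (d - c) * measure F S)" .
  show "measure mu (({a<..b} \<times> {c<..d}) \<times> S) = (b - a) * (d - c) * measure F S"
    unfolding measure_def e using assms by simp
qed

lemma rect_finite:
  assumes "a \<le> b" "c \<le> d" "S \<in> sets borel"
  shows "emeasure mu (({a<..b} \<times> {c<..d}) \<times> S) < \<infinity>"
  unfolding mu_rect(2)[OF assms] by simp

lemma AE_G1: "AE \<omega> in M. \<forall>n::nat. finite {a\<in>Q \<omega>. \<bar>fst (fst a)\<bar> \<le> real n \<and> \<bar>snd (fst a)\<bar> \<le> real n}"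
proof (subst AE_all_countable, intro allI)
  fix n :: nat
  let ?B = "({- real n - 1<..real n} \<times> {- real n - 1<..real n}) \<times> (UNIV :: real set)"
  have "AE \<omega> in M. finite (Q \<omega> \<inter> ?B)"
    by (rule mp_unf(1)[OF mu_rect(1) rect_finite]) auto
  then show "AE \<omega> in M. finite {a\<in>Q \<omega>. \<bar>fst (fst a)\<bar> \<le> real n \<and> \<bar>snd (fst a)\<bar> \<le> real n}"
  proof (rule AE_mp, intro AE_I2 impI)
    fix \<omega> assume "finite (Q \<omega> \<inter> ?B)"
    then show "finite {a\<in>Q \<omega>. \<bar>fst (fst a)\<bar> \<le> real n \<and> \<bar>snd (fst a)\<bar> \<le> real n}"
      by (rule finite_subset[rotated]) auto
  qed
qed

lemma bounded_finite:
  assumes "\<forall>n::nat. finite {a\<in>Qc. \<bar>fst (fst a)\<bar> \<le> real n \<and> \<bar>snd (fst a)\<bar> \<le> real n}"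
    and "\<forall>a\<in>X. \<bar>fst (fst a)\<bar> \<le> r \<and> \<bar>snd (fst a)\<bar> \<le> r"
  shows "finite (Qc \<inter> X)"
proof -
  obtain n :: nat where n: "r \<le> real n" using real_arch_simple by blast
  have "Qc \<inter> X \<subseteq> {a\<in>Qc. \<bar>fst (fst a)\<bar> \<le> real n \<and> \<bar>snd (fst a)\<bar> \<le> real n}"
    using assms(2) n by force
  then show ?thesis by (rule finite_subset) (use assms(1) in blast)
qed

lemma AE_G2: "AE \<omega> in M. \<forall>a\<in>Q \<omega>. 0 < snd a"
proof -
  let ?B = "(UNIV :: (real \<times> real) set) \<times> {..(0::real)}"
  have B: "?B \<in> sets mu" by (rule mu_times(1)) auto
  have e0: "emeasure mu ?B = 0" using mu_times(2)[of UNIV "{..0}"] F0 by simp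
  then have fin: "emeasure mu ?B < \<infinity>" by simp
  have m0: "measure mu ?B = 0" unfolding measure_def e0 by simp
  have "M.prob {\<omega> \<in> space M. card (Q \<omega> \<inter> ?B) = 0} = 1" using mp_unf(3)[OF B fin, of 0] m0 by simp
  then have "AE \<omega> in M. \<omega> \<in> {\<omega> \<in> space M. card (Q \<omega> \<inter> ?B) = 0}" by (rule M.AE_prob_1)
  moreover have "AE \<omega> in M. finite (Q \<omega> \<inter> ?B)" by (rule mp_unf(1)[OF B fin])
  ultimately show ?thesis
  proof eventually_elim
    case (elim \<omega>)
    then have "Q \<omega> \<inter> ?B = {}" by auto
    then show ?case by force
  qed
qed

lemma atoms_countable:
  fixes \<nu> :: "real measure"
  assumes S: "sets \<nu> = sets borel" and fin: "\<forall>a b. emeasure \<nu> {a<..b} < \<infinity>"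
  shows "countable {x. emeasure \<nu> {x} \<noteq> 0}"
proof -
  have sp: "space \<nu> = UNIV" using sets_eq_imp_space_eq[OF S] by simp
  have "{x. emeasure \<nu> {x} \<noteq> 0} \<subseteq> (\<Union>n::nat. {x. measure (restrict_space \<nu> {- real n<..real n}) {x} \<noteq> 0})"
  proof
    fix x assume x: "x \<in> {x. emeasure \<nu> {x} \<noteq> 0}"
    obtain n :: nat where n: "\<bar>x\<bar> < real n" using reals_Archimedean2 by blast
    let ?R = "restrict_space \<nu> {- real n<..real n}"
    have xin: "{x} \<subseteq> {- real n<..real n}" using n by auto
    have "emeasure ?R {x} = emeasure \<nu> {x}" by (rule emeasure_restrict_space) (use S sp xin in auto)
    moreover have "emeasure \<nu> {x} \<le> emeasure \<nu> {- real n<..real n}" by (rule emeasure_mono) (use S xin in auto)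
    ultimately have "emeasure ?R {x} < \<infinity>" using fin by (metis order.strict_trans1)
    then have "measure ?R {x} \<noteq> 0"
      using x \<open>emeasure ?R {x} = emeasure \<nu> {x}\<close> by (simp add: measure_def enn2real_eq_0_iff less_top)
    then show "x \<in> (\<Union>n::nat. {x. measure (restrict_space \<nu> {- real n<..real n}) {x} \<noteq> 0})" by blast
  qed
  moreover have "countable (\<Union>n::nat. {x. measure (restrict_space \<nu> {- real n<..real n}) {x} \<noteq> 0})"
  proof (rule countable_UN[OF countableI_type])
    fix n :: nat
    let ?R = "restrict_space \<nu> {- real n<..real n}"
    have "finite_measure ?R"
    proof (rule finite_measureI)
      have "space ?R = {- real n<..real n}" by (simp add: space_restrict_space sp)
      then have "emeasure ?R (space ?R) = emeasure \<nu> {- real n<..real n}"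
        by (simp add: emeasure_restrict_space S sp)
      then show "emeasure ?R (space ?R) \<noteq> \<infinity>" using fin by (simp add: less_top)
    qed
    then show "countable {x. measure ?R {x} \<noteq> 0}" by (rule finite_measure.countable_support)
  qed
  ultimately show ?thesis by (rule countable_subset)
qed

lemma AE_G4:
  assumes N: "\<nu> \<in> calN"
  shows "AE \<omega> in M. \<forall>a\<in>Q \<omega>. 0 < snd (fst a) \<longrightarrow> emeasure \<nu> {fst (fst a)} = 0"
proof -
  let ?C = "{x. emeasure \<nu> {x} \<noteq> 0}"
  have cC: "countable ?C" by (rule atoms_countable[OF calN_props[OF N]])
  let ?A = "?C \<times> (UNIV :: real set)"
  have Anull: "?A \<in> null_sets (lborel :: (real \<times> real) measure)"
  proof -
    have "?C \<in> null_sets lborel" by (rule countable_imp_null_set_lborel[OF cC])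
    then have "?A \<in> null_sets (lborel \<Otimes>\<^sub>M (lborel :: real measure))"
      by (intro sigma_finite_measure.times_in_null_sets1[OF sigma_finite_lborel]) auto
    then show ?thesis by (simp add: lborel_prod)
  qed
  let ?B = "?A \<times> (UNIV :: real set)"
  have B: "?B \<in> sets mu" by (rule mu_times(1)) (use Anull in auto)
  have e0: "emeasure mu ?B = 0"
    using mu_times(2)[of ?A UNIV] null_setsD1[OF Anull] null_setsD2[OF Anull] by simp
  then have fin: "emeasure mu ?B < \<infinity>" by simp
  have m0: "measure mu ?B = 0" unfolding measure_def e0 by simp
  have "M.prob {\<omega> \<in> space M. card (Q \<omega> \<inter> ?B) = 0} = 1" using mp_unf(3)[OF B fin, of 0] m0 by simp
  then have "AE \<omega> in M. \<omega> \<in> {\<omega> \<in> space M. card (Q \<omega> \<inter> ?B) = 0}" by (rule M.AE_prob_1)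
  moreover have "AE \<omega> in M. finite (Q \<omega> \<inter> ?B)" by (rule mp_unf(1)[OF B fin])
  ultimately show ?thesis
  proof eventually_elim
    case (elim \<omega>)
    then have "Q \<omega> \<inter> ?B = {}" by auto
    then show ?case by force
  qed
qed

lemma grid_index:
  fixes y :: real and K :: nat
  assumes "0 < y" "y \<le> real K"
  shows "\<exists>i<K. real i < y \<and> y \<le> real i + 1"
proof -
  define i where "i = nat (\<lceil>y\<rceil> - 1)"
  have c1: "1 \<le> \<lceil>y\<rceil>" using assms(1) by (simp add: one_le_ceiling)
  have ri: "real i = real_of_int \<lceil>y\<rceil> - 1" unfolding i_def using c1 by simp
  have "real_of_int \<lceil>y\<rceil> - 1 < y" "y \<le> real_of_int \<lceil>y\<rceil>" using ceiling_correct[of y] by auto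
  moreover have cK: "\<lceil>y\<rceil> \<le> int K" using assms(2) by (simp add: ceiling_le_iff)
  moreover have "i < K" unfolding i_def using c1 \<open>\<lceil>y\<rceil> \<le> int K\<close> by (simp add: nat_less_iff)
  ultimately show ?thesis using ri by (intro exI[of _ i]) auto
qed

lemma AE_not_all:
  assumes meas: "\<And>m. A m \<in> sets M" and bnd: "\<And>m. measure M (A m) \<le> c / real (Suc m)"
  shows "AE \<omega> in M. \<exists>m. \<omega> \<notin> A m"
proof -
  let ?A = "\<Inter>m. A m"
  have Am: "?A \<in> sets M" by (rule sets.countable_INT) (use meas in auto)
  have "measure M ?A \<le> 0"
  proof (rule ccontr)
    assume "\<not> measure M ?A \<le> 0"
    then have pos: "0 < measure M ?A" by simp
    have "measure M ?A \<le> measure M (A 0)" by (rule M.finite_measure_mono) (use meas in auto)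
    also have "\<dots> \<le> c" using bnd[of 0] by simp
    finally have "0 < c" using pos by simp
    obtain m0 :: nat where m0: "c / measure M ?A < real m0" using reals_Archimedean2 by blast
    define m where "m = m0"
    have m: "c / measure M ?A < real (Suc m)" using m0 unfolding m_def by simp
    then have "c / real (Suc m) < measure M ?A" using pos by (simp add: field_simps)
    moreover have "measure M ?A \<le> measure M (A m)" by (rule M.finite_measure_mono) (use meas in auto)
    ultimately show False using bnd[of m] by simp
  qed
  then have "measure M ?A = 0" using measure_nonneg[of M ?A] by linarith
  then have "?A \<in> null_sets M" using Am by (simp add: M.emeasure_eq_measure null_sets_def)
  then have "AE \<omega> in M. \<omega> \<notin> ?A" by (rule AE_not_in)
  then show ?thesis by auto
qed

lemma union_ge2_bound:
  assumes I: "finite I" and B: "\<And>i. i \<in> I \<Longrightarrow> B i \<in> sets mu" "\<And>i. i \<in> I \<Longrightarrow> emeasure mu (B i) < \<infinity>"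
  shows "(\<Union>i\<in>I. {\<omega> \<in> space M. 2 \<le> card (Q \<omega> \<inter> B i)}) \<in> sets M"
    "measure M (\<Union>i\<in>I. {\<omega> \<in> space M. 2 \<le> card (Q \<omega> \<inter> B i)}) \<le> (\<Sum>i\<in>I. (measure mu (B i))\<^sup>2)"
proof -
  have ev: "{\<omega> \<in> space M. 2 \<le> card (Q \<omega> \<inter> B i)} \<in> sets M" if "i \<in> I" for i
    by (rule N_ge_meas[OF B(1)[OF that] B(2)[OF that]])
  show "(\<Union>i\<in>I. {\<omega> \<in> space M. 2 \<le> card (Q \<omega> \<inter> B i)}) \<in> sets M" by (rule sets.finite_UN[OF I ev])
  have "measure M (\<Union>i\<in>I. {\<omega> \<in> space M. 2 \<le> card (Q \<omega> \<inter> B i)})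
      \<le> (\<Sum>i\<in>I. measure M {\<omega> \<in> space M. 2 \<le> card (Q \<omega> \<inter> B i)})"
    by (rule M.finite_measure_subadditive_finite[OF I]) (use ev in auto)
  also have "\<dots> \<le> (\<Sum>i\<in>I. (measure mu (B i))\<^sup>2)"
  proof (rule sum_mono)
    fix i assume i: "i \<in> I"
    have "measure M {\<omega> \<in> space M. 2 \<le> card (Q \<omega> \<inter> B i)} \<le> measure mu (B i) ^ 2 / fact 2"
      by (rule N_ge_bound[OF B(1)[OF i] B(2)[OF i]])
    also have "\<dots> \<le> (measure mu (B i))\<^sup>2" by (simp add: divide_le_eq)
    finally show "measure M {\<omega> \<in> space M. 2 \<le> card (Q \<omega> \<inter> B i)} \<le> (measure mu (B i))\<^sup>2" .
  qed
  finally show "measure M (\<Union>i\<in>I. {\<omega> \<in> space M. 2 \<le> card (Q \<omega> \<inter> B i)}) \<le> (\<Sum>i\<in>I. (measure mu (B i))\<^sup>2)" .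
qed

lemma strip_mem:
  fixes x lo :: real and m i :: nat
  assumes "real i < (x - lo) * real (Suc m)" "(x - lo) * real (Suc m) \<le> real i + 1"
  shows "lo + real i / real (Suc m) < x" "x \<le> lo + (real i + 1) / real (Suc m)"
  using assms by (simp_all add: field_simps)

lemma measure_strip:
  assumes "a \<le> b" "c \<le> d"
  shows "measure mu (({a<..b} \<times> {c<..d}) \<times> UNIV) = (b - a) * (d - c)"
  using mu_rect(3)[OF assms, of UNIV] F.prob_space sets_eq_imp_space_eq[OF SF] by simp

end


context setting
begin

lemma AE_G3_n:
  fixes n :: nat
  shows "AE \<omega> in M. \<forall>a\<in>Q \<omega>. \<forall>b\<in>Q \<omega>. a \<in> ({- real n<..real n} \<times> {0<..real n}) \<times> UNIV \<longrightarrow>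
            b \<in> ({- real n<..real n} \<times> {0<..real n}) \<times> UNIV \<longrightarrow> a \<noteq> b \<longrightarrow>
            fst (fst a) \<noteq> fst (fst b) \<and> snd (fst a) \<noteq> snd (fst b)"
proof -
  let ?K = "({- real n<..real n} \<times> {0<..real n}) \<times> (UNIV :: real set)"
  define SX where "SX m i = ({- real n + real i / real (Suc m)<..- real n + (real i + 1) / real (Suc m)} \<times> {0<..real n}) \<times> (UNIV :: real set)" for m i :: nat
  define ST where "ST m i = ({- real n<..real n} \<times> {0 + real i / real (Suc m)<..0 + (real i + 1) / real (Suc m)}) \<times> (UNIV :: real set)" for m i :: nat
  define A where "A m = (\<Union>i\<in>{..<2*n*Suc m}. {\<omega> \<in> space M. 2 \<le> card (Q \<omega> \<inter> SX m i)}) \<union>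
                       (\<Union>i\<in>{..<n*Suc m}. {\<omega> \<in> space M. 2 \<le> card (Q \<omega> \<inter> ST m i)})" for m
  have SXs: "SX m i \<in> sets mu" "emeasure mu (SX m i) < \<infinity>" for m i
    unfolding SX_def by (intro mu_rect(1) rect_finite; simp add: field_simps)+
  have STs: "ST m i \<in> sets mu" "emeasure mu (ST m i) < \<infinity>" for m i
    unfolding ST_def by (intro mu_rect(1) rect_finite; simp add: field_simps)+
  have SXm: "measure mu (SX m i) = real n / real (Suc m)" for m i
    unfolding SX_def by (subst measure_strip) (auto simp: field_simps)
  have STm: "measure mu (ST m i) = 2 * real n / real (Suc m)" for m i
    unfolding ST_def by (subst measure_strip) (auto simp: field_simps)
  have SXK: "SX m i \<subseteq> ({- real n<..real n} \<times> {0<..real n}) \<times> UNIV" if "i < 2*n*Suc m" for m i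
  proof -
    have "i + 1 \<le> 2*n*Suc m" using that by simp
    then have "real (i + 1) \<le> real (2*n*Suc m)" by (simp only: of_nat_le_iff)
    then have "real i + 1 \<le> real (2*n*Suc m)" by simp
    then have "real i + 1 \<le> 2 * real n * real (Suc m)" by (simp add: algebra_simps)
    then have h1: "(real i + 1) / real (Suc m) \<le> 2 * real n" by (simp add: divide_le_eq del: of_nat_Suc)
    have h2: "0 \<le> real i / real (Suc m)" by simp
    show ?thesis
    proof (rule subsetI)
      fix c assume "c \<in> SX m i"
      then have c: "- real n + real i / real (Suc m) < fst (fst c)" "fst (fst c) \<le> - real n + (real i + 1) / real (Suc m)"
        "0 < snd (fst c)" "snd (fst c) \<le> real n"
        unfolding SX_def by (auto simp: mem_Times_iff simp del: of_nat_Suc)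
      have "- real n < fst (fst c)" "fst (fst c) \<le> real n" using c(1,2) h1 h2 by linarith+
      then show "c \<in> ({- real n<..real n} \<times> {0<..real n}) \<times> UNIV" using c(3,4) by (auto simp: mem_Times_iff)
    qed
  qed
  have STK: "ST m i \<subseteq> ({- real n<..real n} \<times> {0<..real n}) \<times> UNIV" if "i < n*Suc m" for m i
  proof -
    have "i + 1 \<le> n*Suc m" using that by simp
    then have "real (i + 1) \<le> real (n*Suc m)" by (simp only: of_nat_le_iff)
    then have "real i + 1 \<le> real (n*Suc m)" by simp
    then have "real i + 1 \<le> real n * real (Suc m)" by (simp add: algebra_simps)
    then have h1: "(real i + 1) / real (Suc m) \<le> real n" by (simp add: divide_le_eq del: of_nat_Suc)
    have h2: "0 \<le> real i / real (Suc m)" by simp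
    show ?thesis
    proof (rule subsetI)
      fix c assume "c \<in> ST m i"
      then have c: "0 + real i / real (Suc m) < snd (fst c)" "snd (fst c) \<le> 0 + (real i + 1) / real (Suc m)"
        "- real n < fst (fst c)" "fst (fst c) \<le> real n"
        unfolding ST_def by (auto simp: mem_Times_iff simp del: of_nat_Suc)
      have "0 < snd (fst c)" "snd (fst c) \<le> real n" using c(1,2) h1 h2 by linarith+
      then show "c \<in> ({- real n<..real n} \<times> {0<..real n}) \<times> UNIV" using c(3,4) by (auto simp: mem_Times_iff)
    qed
  qed
  have Ameas: "A m \<in> sets M" for m
    unfolding A_def
    by (rule sets.Un[OF union_ge2_bound(1)[OF finite_lessThan SXs(1) SXs(2)] union_ge2_bound(1)[OF finite_lessThan STs(1) STs(2)]])
  have Abnd: "measure M (A m) \<le> 6 * real n ^ 3 / real (Suc m)" for m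
  proof -
    have "measure M (A m) \<le> measure M (\<Union>i\<in>{..<2*n*Suc m}. {\<omega> \<in> space M. 2 \<le> card (Q \<omega> \<inter> SX m i)}) +
                            measure M (\<Union>i\<in>{..<n*Suc m}. {\<omega> \<in> space M. 2 \<le> card (Q \<omega> \<inter> ST m i)})"
      unfolding A_def
      by (rule measure_Un_le[OF union_ge2_bound(1)[OF finite_lessThan SXs(1) SXs(2)] union_ge2_bound(1)[OF finite_lessThan STs(1) STs(2)]])
    also have "\<dots> \<le> (\<Sum>i\<in>{..<2*n*Suc m}. (measure mu (SX m i))\<^sup>2) + (\<Sum>i\<in>{..<n*Suc m}. (measure mu (ST m i))\<^sup>2)"
      by (rule add_mono[OF union_ge2_bound(2)[OF finite_lessThan SXs(1) SXs(2)] union_ge2_bound(2)[OF finite_lessThan STs(1) STs(2)]])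
    also have "\<dots> = real (2*n*Suc m) * (real n / real (Suc m))\<^sup>2 + real (n*Suc m) * (2 * real n / real (Suc m))\<^sup>2"
      unfolding SXm STm by simp
    also have "\<dots> = 6 * real n ^ 3 / real (Suc m)"
    proof -
      have ar: "2 * x * q * (x / q)\<^sup>2 + x * q * (2 * x / q)\<^sup>2 = 6 * x ^ 3 / q" if "q > 0" for x q :: real
        using that by (simp add: field_simps power2_eq_square power3_eq_cube)
      show ?thesis using ar[of "real (Suc m)" "real n"] by (simp only: of_nat_mult of_nat_numeral)
    qed
    finally show ?thesis .
  qed
  have "AE \<omega> in M. \<exists>m. \<omega> \<notin> A m" by (rule AE_not_all[OF Ameas Abnd])
  moreover have "AE \<omega> in M. finite (Q \<omega> \<inter> ?K)" by (rule mp_unf(1)[OF mu_rect(1) rect_finite]) auto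
  moreover have "AE \<omega> in M. \<omega> \<in> space M" by simp
  ultimately show ?thesis
  proof eventually_elim
    case (elim \<omega>)
    then obtain m where m: "\<omega> \<notin> A m" by blast
    have card2: "2 \<le> card (Q \<omega> \<inter> S)" if "a \<in> Q \<omega> \<inter> S" "b \<in> Q \<omega> \<inter> S" "a \<noteq> b" "S \<subseteq> ?K" for a b S
    proof -
      have "finite (Q \<omega> \<inter> S)" by (rule finite_subset[OF _ elim(2)]) (use that(4) in auto)
      moreover have "{a, b} \<subseteq> Q \<omega> \<inter> S" using that by auto
      ultimately have "card {a, b} \<le> card (Q \<omega> \<inter> S)" by (rule card_mono)
      then show ?thesis using that(3) by simp
    qed
    show ?case
    proof (intro ballI impI)
      fix a b assume a: "a \<in> Q \<omega>" and b: "b \<in> Q \<omega>" and aK: "a \<in> ?K" and bK: "b \<in> ?K" and ab: "a \<noteq> b"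
      show "fst (fst a) \<noteq> fst (fst b) \<and> snd (fst a) \<noteq> snd (fst b)"
      proof (intro conjI notI)
        assume eq: "fst (fst a) = fst (fst b)"
        let ?y = "(fst (fst a) - (- real n)) * real (Suc m)"
        have hx: "0 < fst (fst a) - (- real n)" "fst (fst a) - (- real n) \<le> real (2*n)" using aK by (auto simp: mem_Times_iff)
        have "0 < ?y" using hx(1) by simp
        moreover have "?y \<le> real (2*n) * real (Suc m)" by (rule mult_right_mono[OF hx(2)]) simp
        ultimately have "0 < ?y" "?y \<le> real (2*n*Suc m)" by (simp_all only: of_nat_mult)
        then obtain i where i: "i < 2*n*Suc m" "real i < ?y" "?y \<le> real i + 1" using grid_index by blast
        have inS: "c \<in> SX m i" if "c \<in> ?K" "fst (fst c) = fst (fst a)" for c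
          using strip_mem[OF i(2,3)] that unfolding SX_def by (auto simp: mem_Times_iff)
        have "2 \<le> card (Q \<omega> \<inter> SX m i)"
          by (rule card2[OF _ _ ab SXK[OF i(1)]]) (use a b inS[OF aK] inS[OF bK eq[symmetric]] in auto)
        then have "\<omega> \<in> A m" unfolding A_def using i(1) elim(3) by blast
        then show False using m by simp
      next
        assume eq: "snd (fst a) = snd (fst b)"
        let ?y = "(snd (fst a) - 0) * real (Suc m)"
        have hx: "0 < snd (fst a) - 0" "snd (fst a) - 0 \<le> real n" using aK by (auto simp: mem_Times_iff)
        have "0 < ?y" using hx(1) by simp
        moreover have "?y \<le> real n * real (Suc m)" by (rule mult_right_mono[OF hx(2)]) simp
        ultimately have "0 < ?y" "?y \<le> real (n*Suc m)" by (simp_all only: of_nat_mult)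
        then obtain i where i: "i < n*Suc m" "real i < ?y" "?y \<le> real i + 1" using grid_index by blast
        have inS: "c \<in> ST m i" if "c \<in> ?K" "snd (fst c) = snd (fst a)" for c
          using strip_mem[OF i(2,3)] that unfolding ST_def by (auto simp: mem_Times_iff)
        have "2 \<le> card (Q \<omega> \<inter> ST m i)"
          by (rule card2[OF _ _ ab STK[OF i(1)]]) (use a b inS[OF aK] inS[OF bK eq[symmetric]] in auto)
        then have "\<omega> \<in> A m" unfolding A_def using i(1) elim(3) by blast
        then show False using m by simp
      qed
    qed
  qed
qed

lemma AE_G3:
  "AE \<omega> in M. \<forall>a\<in>Q \<omega>. \<forall>b\<in>Q \<omega>. 0 < snd (fst a) \<longrightarrow> 0 < snd (fst b) \<longrightarrow> a \<noteq> b \<longrightarrow>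
        fst (fst a) \<noteq> fst (fst b) \<and> snd (fst a) \<noteq> snd (fst b)"
proof -
  have "AE \<omega> in M. \<forall>n::nat. \<forall>a\<in>Q \<omega>. \<forall>b\<in>Q \<omega>. a \<in> ({- real n<..real n} \<times> {0<..real n}) \<times> UNIV \<longrightarrow>
            b \<in> ({- real n<..real n} \<times> {0<..real n}) \<times> UNIV \<longrightarrow> a \<noteq> b \<longrightarrow>
            fst (fst a) \<noteq> fst (fst b) \<and> snd (fst a) \<noteq> snd (fst b)"
    by (subst AE_all_countable) (intro allI AE_G3_n)
  then show ?thesis
  proof eventually_elim
    case (elim \<omega>)
    show ?case
    proof (intro ballI impI)
      fix a b assume a: "a \<in> Q \<omega>" and b: "b \<in> Q \<omega>" and ta: "0 < snd (fst a)" and tb: "0 < snd (fst b)" and ab: "a \<noteq> b"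
      obtain n :: nat where n: "\<bar>fst (fst a)\<bar> + \<bar>fst (fst b)\<bar> + snd (fst a) + snd (fst b) < real n"
        using reals_Archimedean2 by blast
      have "a \<in> ({- real n<..real n} \<times> {0<..real n}) \<times> UNIV" "b \<in> ({- real n<..real n} \<times> {0<..real n}) \<times> UNIV"
        using n ta tb by (auto simp: mem_Times_iff abs_if split: if_splits)
      then show "fst (fst a) \<noteq> fst (fst b) \<and> snd (fst a) \<noteq> snd (fst b)"
        using elim a b ab by blast
    qed
  qed
qed

end


lemma ceil_index:
  fixes y :: real and K :: nat
  assumes "0 < y" "y \<le> real K"
  shows "nat (\<lceil>y\<rceil> - 1) < K" "real (nat (\<lceil>y\<rceil> - 1)) < y" "y \<le> real (nat (\<lceil>y\<rceil> - 1)) + 1"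
proof -
  have c1: "1 \<le> \<lceil>y\<rceil>" using assms(1) by (simp add: one_le_ceiling)
  have ri: "real (nat (\<lceil>y\<rceil> - 1)) = real_of_int \<lceil>y\<rceil> - 1" using c1 by simp
  have "real_of_int \<lceil>y\<rceil> - 1 < y" "y \<le> real_of_int \<lceil>y\<rceil>" using ceiling_correct[of y] by auto
  moreover have cK: "\<lceil>y\<rceil> \<le> int K" using assms(2) by (simp add: ceiling_le_iff)
  ultimately show "nat (\<lceil>y\<rceil> - 1) < K" "real (nat (\<lceil>y\<rceil> - 1)) < y" "y \<le> real (nat (\<lceil>y\<rceil> - 1)) + 1"
    using ri c1 by (simp_all add: nat_less_iff)
qed

lemma ceil_index_mono: "y \<le> y' \<Longrightarrow> nat (\<lceil>y\<rceil> - 1) \<le> nat (\<lceil>y'\<rceil> - 1)"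
  by (intro nat_mono diff_right_mono ceiling_mono)

lemma sorted_wrt_comparable:
  "sorted_wrt R xs \<Longrightarrow> a \<in> set xs \<Longrightarrow> b \<in> set xs \<Longrightarrow> a = b \<or> R a b \<or> R b a"
  by (induction xs) auto

lemma chain_grid_bound:
  fixes xs :: "((real \<times> real) \<times> real) list" and lo wd ht :: real and k c :: nat
  assumes inc: "incr_chain xs" and wd: "0 < wd" and ht: "0 < ht"
    and box: "\<forall>a\<in>set xs. lo < fst (fst a) \<and> fst (fst a) \<le> lo + real k * wd \<and> 0 < snd (fst a) \<and> snd (fst a) \<le> real k * ht"
    and cell: "\<forall>i<k. \<forall>l<k. card {a\<in>set xs. lo + real i * wd < fst (fst a) \<and> fst (fst a) \<le> lo + (real i + 1) * wd \<and>
                              real l * ht < snd (fst a) \<and> snd (fst a) \<le> (real l + 1) * ht} \<le> c"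
  shows "length xs \<le> 2 * k * c"
proof -
  define ci where "ci a = (nat (\<lceil>(fst (fst a) - lo) / wd\<rceil> - 1), nat (\<lceil>snd (fst a) / ht\<rceil> - 1))" for a :: "(real \<times> real) \<times> real"
  have ci: "fst (ci a) < k \<and> snd (ci a) < k \<and>
     lo + real (fst (ci a)) * wd < fst (fst a) \<and> fst (fst a) \<le> lo + (real (fst (ci a)) + 1) * wd \<and>
     real (snd (ci a)) * ht < snd (fst a) \<and> snd (fst a) \<le> (real (snd (ci a)) + 1) * ht" if a: "a \<in> set xs" for a
  proof -
    let ?y = "(fst (fst a) - lo) / wd" and ?z = "snd (fst a) / ht"
    have y: "0 < ?y" "?y \<le> real k" using box a wd by (auto simp: field_simps)
    have z: "0 < ?z" "?z \<le> real k" using box a ht by (auto simp: field_simps)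
    note Y = ceil_index[OF y] and Z = ceil_index[OF z]
    have "lo + real (fst (ci a)) * wd < fst (fst a)" using Y(2) wd unfolding ci_def by (simp add: field_simps)
    moreover have "fst (fst a) \<le> lo + (real (fst (ci a)) + 1) * wd" using Y(3) wd unfolding ci_def by (simp add: field_simps)
    moreover have "real (snd (ci a)) * ht < snd (fst a)" using Z(2) ht unfolding ci_def by (simp add: field_simps)
    moreover have "snd (fst a) \<le> (real (snd (ci a)) + 1) * ht" using Z(3) ht unfolding ci_def by (simp add: field_simps)
    ultimately show ?thesis using Y(1) Z(1) unfolding ci_def by simp
  qed
  have mono: "fst (ci a) \<le> fst (ci b) \<and> snd (ci a) \<le> snd (ci b)"
    if "fst (fst a) \<le> fst (fst b)" "snd (fst a) \<le> snd (fst b)" for a b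
    unfolding ci_def using that wd ht by (auto intro!: ceil_index_mono divide_right_mono)
  define V where "V = ci ` set xs"
  have finV: "finite V" unfolding V_def by simp
  have injV: "inj_on (\<lambda>v. fst v + snd v) V"
  proof (rule inj_onI)
    fix v1 v2 assume v1: "v1 \<in> V" and v2: "v2 \<in> V" and s: "fst v1 + snd v1 = fst v2 + snd v2"
    obtain a where a: "a \<in> set xs" "v1 = ci a" using v1 unfolding V_def by blast
    obtain b where b: "b \<in> set xs" "v2 = ci b" using v2 unfolding V_def by blast
    have "a = b \<or> (fst (fst a) \<le> fst (fst b) \<and> snd (fst a) \<le> snd (fst b)) \<or> (fst (fst b) \<le> fst (fst a) \<and> snd (fst b) \<le> snd (fst a))"
      using sorted_wrt_comparable[OF inc[unfolded incr_chain_def] a(1) b(1)] by auto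
    then show "v1 = v2"
    proof (elim disjE)
      assume "a = b" then show ?thesis using a b by simp
    next
      assume "fst (fst a) \<le> fst (fst b) \<and> snd (fst a) \<le> snd (fst b)"
      then have "fst (ci a) \<le> fst (ci b) \<and> snd (ci a) \<le> snd (ci b)" using mono by blast
      then show ?thesis using s a b by (simp add: prod_eq_iff)
    next
      assume "fst (fst b) \<le> fst (fst a) \<and> snd (fst b) \<le> snd (fst a)"
      then have "fst (ci b) \<le> fst (ci a) \<and> snd (ci b) \<le> snd (ci a)" using mono by blast
      then show ?thesis using s a b by (simp add: prod_eq_iff)
    qed
  qed
  have cardV: "card V \<le> 2 * k"
  proof -
    have "card V = card ((\<lambda>v. fst v + snd v) ` V)" using card_image[OF injV] by simp
    also have "\<dots> \<le> card {..<2*k}"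
    proof (rule card_mono)
      show "(\<lambda>v. fst v + snd v) ` V \<subseteq> {..<2*k}" unfolding V_def using ci by force
    qed simp
    finally show ?thesis by simp
  qed
  have "length xs = card (set xs)" using incr_chain_distinct[OF inc] by (simp add: distinct_card)
  also have "set xs = (\<Union>v\<in>V. {a\<in>set xs. ci a = v})" unfolding V_def by auto
  also have "card \<dots> \<le> (\<Sum>v\<in>V. card {a\<in>set xs. ci a = v})" by (rule card_UN_le[OF finV])
  also have "\<dots> \<le> (\<Sum>v\<in>V. c)"
  proof (rule sum_mono)
    fix v assume v: "v \<in> V"
    then obtain a where a: "a \<in> set xs" "v = ci a" unfolding V_def by blast
    have "{b\<in>set xs. ci b = v} \<subseteq> {b\<in>set xs. lo + real (fst v) * wd < fst (fst b) \<and> fst (fst b) \<le> lo + (real (fst v) + 1) * wd \<and>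
                              real (snd v) * ht < snd (fst b) \<and> snd (fst b) \<le> (real (snd v) + 1) * ht}"
      using ci by auto
    then have "card {b\<in>set xs. ci b = v} \<le> card {b\<in>set xs. lo + real (fst v) * wd < fst (fst b) \<and> fst (fst b) \<le> lo + (real (fst v) + 1) * wd \<and>
                              real (snd v) * ht < snd (fst b) \<and> snd (fst b) \<le> (real (snd v) + 1) * ht}"
      by (rule card_mono[rotated]) simp
    also have "\<dots> \<le> c" using cell ci[OF a(1)] a(2) by simp
    finally show "card {b\<in>set xs. ci b = v} \<le> c" .
  qed
  also have "\<dots> = card V * c" by simp
  also have "\<dots> \<le> 2 * k * c" using cardV by simp
  finally show ?thesis .
qed

lemma LPP_grid_bound:
  fixes Qc :: mconf and lo wd ht s :: real and k c :: nat
  assumes wd: "0 < wd" and ht: "0 < ht" and s: "0 \<le> s"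
    and cellfin: "\<forall>i<k. \<forall>l<k. finite (Qc \<inter> ({lo + real i * wd<..lo + (real i + 1) * wd} \<times> {real l * ht<..(real l + 1) * ht}) \<times> UNIV) \<and>
        card (Qc \<inter> ({lo + real i * wd<..lo + (real i + 1) * wd} \<times> {real l * ht<..(real l + 1) * ht}) \<times> UNIV) \<le> c"
    and wt: "\<forall>a\<in>Qc. inbox (lo,0) (lo + real k * wd, real k * ht) a \<longrightarrow> snd a \<le> s"
  shows "LPP Qc (lo,0) (lo + real k * wd, real k * ht) \<le> ereal (real (2 * k * c) * s)"
proof (rule LPP_le)
  fix xs assume xs: "xs \<in> lchains Qc (lo,0) (lo + real k * wd, real k * ht)"
  have inc: "incr_chain xs" and sub: "set xs \<subseteq> Qc" and inb: "\<forall>a\<in>set xs. inbox (lo,0) (lo + real k * wd, real k * ht) a"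
    using xs unfolding lchains_def by auto
  have len: "length xs \<le> 2 * k * c"
  proof (rule chain_grid_bound[OF inc wd ht])
    show "\<forall>a\<in>set xs. lo < fst (fst a) \<and> fst (fst a) \<le> lo + real k * wd \<and> 0 < snd (fst a) \<and> snd (fst a) \<le> real k * ht"
      using inb by (auto simp: inbox_def)
    show "\<forall>i<k. \<forall>l<k. card {a\<in>set xs. lo + real i * wd < fst (fst a) \<and> fst (fst a) \<le> lo + (real i + 1) * wd \<and>
                              real l * ht < snd (fst a) \<and> snd (fst a) \<le> (real l + 1) * ht} \<le> c"
    proof (intro allI impI)
      fix i l assume il: "i < k" "l < k"
      let ?C = "({lo + real i * wd<..lo + (real i + 1) * wd} \<times> {real l * ht<..(real l + 1) * ht}) \<times> (UNIV :: real set)"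
      have "{a\<in>set xs. lo + real i * wd < fst (fst a) \<and> fst (fst a) \<le> lo + (real i + 1) * wd \<and>
                              real l * ht < snd (fst a) \<and> snd (fst a) \<le> (real l + 1) * ht} \<subseteq> Qc \<inter> ?C"
        using sub by (auto simp: mem_Times_iff)
      then have "card {a\<in>set xs. lo + real i * wd < fst (fst a) \<and> fst (fst a) \<le> lo + (real i + 1) * wd \<and>
                              real l * ht < snd (fst a) \<and> snd (fst a) \<le> (real l + 1) * ht} \<le> card (Qc \<inter> ?C)"
        by (rule card_mono[rotated]) (use cellfin il in blast)
      also have "\<dots> \<le> c" using cellfin il by blast
      finally show "card {a\<in>set xs. lo + real i * wd < fst (fst a) \<and> fst (fst a) \<le> lo + (real i + 1) * wd \<and>
                              real l * ht < snd (fst a) \<and> snd (fst a) \<le> (real l + 1) * ht} \<le> c" .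
    qed
  qed
  have "sum_list (map snd xs) \<le> sum_list (map (\<lambda>_. s) xs)"
    by (rule sum_list_mono) (use wt sub inb in blast)
  also have "\<dots> = real (length xs) * s" by (simp add: sum_list_triv)
  also have "\<dots> \<le> real (2 * k * c) * s"
  proof (rule mult_right_mono[OF _ s])
    show "real (length xs) \<le> real (2 * k * c)" using len by (simp only: of_nat_le_iff)
  qed
  finally show "ereal (sum_list (map snd xs)) \<le> ereal (real (2 * k * c) * s)" by simp
qed

lemma sq_over_pow2_lim: "(\<lambda>j::nat. real j ^ 2 / 2 ^ j) \<longlonglongrightarrow> 0"
proof -
  have lim: "((\<lambda>x::real. x ^ 2 / exp x) \<longlongrightarrow> 0) at_top" by (rule tendsto_power_div_exp_0)
  have fl: "filterlim (\<lambda>j::nat. ln 2 * real j) at_top sequentially"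
    by (rule filterlim_tendsto_pos_mult_at_top[OF tendsto_const _ filterlim_real_sequentially]) simp
  have "(\<lambda>j::nat. (ln 2 * real j) ^ 2 / exp (ln 2 * real j)) \<longlonglongrightarrow> 0"
    by (rule filterlim_compose[OF lim fl])
  then have "(\<lambda>j::nat. (1 / (ln 2)^2) * ((ln 2 * real j) ^ 2 / exp (ln 2 * real j))) \<longlonglongrightarrow> (1 / (ln 2)^2) * 0"
    by (intro tendsto_mult tendsto_const)
  moreover have "(1 / (ln 2)^2) * ((ln 2 * real j) ^ 2 / exp (ln 2 * real j)) = real j ^ 2 / 2 ^ j" for j :: nat
  proof -
    have "exp (ln 2 * real j) = 2 ^ j" using exp_of_nat_mult[of j "ln (2::real)"] by (simp add: mult.commute)
    moreover have "ln (2::real) \<noteq> 0" by simp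
    ultimately show ?thesis by (simp add: power_mult_distrib)
  qed
  ultimately show ?thesis by simp
qed

lemma G5_det:
  fixes Qc :: mconf and a :: real and T :: real
  assumes a: "0 < a"
    and ev: "\<exists>J. \<forall>j\<ge>J. LPP Qc (- (4 ^ j), 0) (4 ^ j, T) \<le> ereal (8 * real j ^ 2 * 2 ^ j / a)"
  shows "\<forall>e>0. \<exists>R. \<forall>r\<ge>R. LPP Qc (-r,0) (r,T) \<le> ereal (e*r)"
proof (intro allI impI)
  fix e :: real assume e: "0 < e"
  obtain J1 where J1: "\<And>j. j \<ge> J1 \<Longrightarrow> LPP Qc (- (4 ^ j), 0) (4 ^ j, T) \<le> ereal (8 * real j ^ 2 * 2 ^ j / a)"
    using ev by blast
  have "eventually (\<lambda>j. real j ^ 2 / 2 ^ j < a * e / 32) sequentially"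
    using sq_over_pow2_lim a e by (intro order_tendstoD(2)) auto
  then obtain J2 where J2: "\<And>j. j \<ge> J2 \<Longrightarrow> real j ^ 2 / 2 ^ j < a * e / 32"
    unfolding eventually_sequentially by blast
  define J where "J = max J1 J2"
  have bnd: "LPP Qc (- (4 ^ j), 0) (4 ^ j, T) \<le> ereal (e / 4 * 4 ^ j)" if "j \<ge> J" for j
  proof -
    have "LPP Qc (- (4 ^ j), 0) (4 ^ j, T) \<le> ereal (8 * real j ^ 2 * 2 ^ j / a)" using J1 that unfolding J_def by simp
    also have "8 * real j ^ 2 * 2 ^ j / a \<le> e / 4 * 4 ^ j"
    proof -
      have "real j ^ 2 / 2 ^ j < a * e / 32" using J2 that unfolding J_def by simp
      then have "real j ^ 2 < a * e / 32 * 2 ^ j" by (simp add: divide_less_eq)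
      then have "8 * real j ^ 2 * 2 ^ j \<le> 8 * (a * e / 32 * 2 ^ j) * 2 ^ j" by (intro mult_right_mono mult_left_mono) auto
      also have "\<dots> = a * (e / 4 * 4 ^ j)" by (simp add: power_mult_distrib[symmetric] field_simps)
      finally show ?thesis using a by (simp add: divide_le_eq mult.commute)
    qed
    finally show ?thesis by simp
  qed
  show "\<exists>R. \<forall>r\<ge>R. LPP Qc (-r,0) (r,T) \<le> ereal (e*r)"
  proof (intro exI[of _ "4 ^ J"] allI impI)
    fix r :: real assume r: "4 ^ J \<le> r"
    have ex: "\<exists>j. J \<le> j \<and> r \<le> 4 ^ j"
    proof -
      obtain n where n: "r < 4 ^ n" using real_arch_pow[of 4 r] by auto
      have "(4::real) ^ n \<le> 4 ^ max J n" by (rule power_increasing) auto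
      then have "r \<le> 4 ^ max J n" using n by linarith
      then show ?thesis by (intro exI[of _ "max J n"]) auto
    qed
    define j where "j = (LEAST j. J \<le> j \<and> r \<le> 4 ^ j)"
    have j: "J \<le> j" "r \<le> 4 ^ j" using LeastI_ex[OF ex] unfolding j_def by auto
    have j4: "4 ^ j \<le> 4 * r"
    proof (cases "j = J")
      case True
      have "(0::real) \<le> 4 ^ J" by simp
      then show ?thesis using r unfolding True by linarith
    next
      case False
      then obtain j' where j': "j = Suc j'" "J \<le> j'" using j(1) by (cases j) auto
      have "\<not> (J \<le> j' \<and> r \<le> 4 ^ j')" using not_less_Least[of j' "\<lambda>j. J \<le> j \<and> r \<le> 4 ^ j"] j' unfolding j_def by auto
      then have "4 ^ j' < r" using j' by auto
      then show ?thesis using j' by simp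
    qed
    have "0 \<le> r" using r by (smt (verit) zero_le_power)
    have "LPP Qc (-r,0) (r,T) \<le> LPP Qc (- (4 ^ j), 0) (4 ^ j, T)" by (rule LPP_mono) (use j in auto)
    also have "\<dots> \<le> ereal (e / 4 * 4 ^ j)" by (rule bnd[OF j(1)])
    also have "e / 4 * 4 ^ j \<le> e * r" using j4 e by (simp add: field_simps)
    finally show "LPP Qc (-r,0) (r,T) \<le> ereal (e*r)" by simp
  qed
qed


context setting
begin

definition cellC :: "nat \<Rightarrow> real \<Rightarrow> nat \<times> nat \<Rightarrow> ((real \<times> real) \<times> real) set" where
  "cellC j T p = ({- (4 ^ j) + real (fst p) * (2 * 2 ^ j)<..- (4 ^ j) + (real (fst p) + 1) * (2 * 2 ^ j)} \<times>
                  {real (snd p) * (T / 2 ^ j)<..(real (snd p) + 1) * (T / 2 ^ j)}) \<times> UNIV"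

lemma cellC_props:
  assumes T: "0 < T"
  shows "cellC j T p \<in> sets mu" "emeasure mu (cellC j T p) < \<infinity>" "measure mu (cellC j T p) = 2 * T"
proof -
  have le1: "- (4 ^ j) + real (fst p) * (2 * 2 ^ j) \<le> - (4 ^ j) + (real (fst p) + 1) * (2 * 2 ^ j :: real)"
    by (simp add: algebra_simps)
  have le2: "real (snd p) * (T / 2 ^ j) \<le> (real (snd p) + 1) * (T / 2 ^ j)" by (rule mult_right_mono) (use T in auto)
  show "cellC j T p \<in> sets mu" unfolding cellC_def by (rule mu_rect(1)[OF le1 le2]) simp
  show "emeasure mu (cellC j T p) < \<infinity>" unfolding cellC_def by (rule rect_finite[OF le1 le2]) simp
  have d1: "(- (4 ^ j) + (real (fst p) + 1) * (2 * 2 ^ j)) - (- (4 ^ j) + real (fst p) * (2 * 2 ^ j)) = (2 * 2 ^ j :: real)"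
    by (simp add: algebra_simps)
  have d2: "(real (snd p) + 1) * (T / 2 ^ j) - real (snd p) * (T / 2 ^ j) = T / 2 ^ j"
    by (simp add: algebra_simps add_divide_distrib)
  have "measure mu (cellC j T p) = (2 * 2 ^ j) * (T / 2 ^ j)"
    unfolding cellC_def measure_strip[OF le1 le2] d1 d2 ..
  also have "\<dots> = 2 * T" by simp
  finally show "measure mu (cellC j T p) = 2 * T" .
qed

definition E1 :: "nat \<Rightarrow> real \<Rightarrow> 'a set" where
  "E1 j T = (\<Union>p\<in>{..<(2::nat)^j}\<times>{..<(2::nat)^j}. {\<omega> \<in> space M. j \<le> card (Q \<omega> \<inter> cellC j T p)})"

lemma E1_props:
  assumes T: "0 < T"
  shows "E1 j T \<in> sets M" "measure M (E1 j T) \<le> (8 * T) ^ j / fact j"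
proof -
  have ev: "{\<omega> \<in> space M. j \<le> card (Q \<omega> \<inter> cellC j T p)} \<in> sets M" for p
    by (rule N_ge_meas[OF cellC_props(1,2)[OF T]])
  show "E1 j T \<in> sets M" unfolding E1_def by (rule sets.finite_UN) (auto intro: ev)
  have "measure M (E1 j T) \<le> (\<Sum>p\<in>{..<(2::nat)^j}\<times>{..<(2::nat)^j}. measure M {\<omega> \<in> space M. j \<le> card (Q \<omega> \<inter> cellC j T p)})"
    unfolding E1_def by (rule M.finite_measure_subadditive_finite) (auto intro: ev)
  also have "\<dots> \<le> (\<Sum>p\<in>{..<(2::nat)^j}\<times>{..<(2::nat)^j}. (2 * T) ^ j / fact j)"
  proof (rule sum_mono)
    fix p :: "nat \<times> nat"
    have "measure M {\<omega> \<in> space M. j \<le> card (Q \<omega> \<inter> cellC j T p)} \<le> measure mu (cellC j T p) ^ j / fact j"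
      by (rule N_ge_bound[OF cellC_props(1,2)[OF T]])
    then show "measure M {\<omega> \<in> space M. j \<le> card (Q \<omega> \<inter> cellC j T p)} \<le> (2 * T) ^ j / fact j"
      unfolding cellC_props(3)[OF T] .
  qed
  also have "\<dots> = real (2^j * 2^j) * ((2 * T) ^ j / fact j)" by simp
  also have "\<dots> = (8 * T) ^ j / fact j"
  proof -
    have "(8 * T) ^ j = (2 * 2 * (2 * T)) ^ j" by simp
    also have "\<dots> = 2 ^ j * 2 ^ j * (2 * T) ^ j" by (simp only: power_mult_distrib)
    also have "\<dots> = real ((2::nat)^j * 2^j) * (2 * T) ^ j" by simp
    finally show ?thesis by (metis times_divide_eq_right)
  qed
  finally show "measure M (E1 j T) \<le> (8 * T) ^ j / fact j" .
qed

definition sW :: "nat \<Rightarrow> real \<Rightarrow> real" where "sW j a = 4 * real j / a"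

definition W :: "nat \<Rightarrow> real \<Rightarrow> real \<Rightarrow> ((real \<times> real) \<times> real) set" where
  "W j T a = ({- (4 ^ j)<..4 ^ j} \<times> {0<..T}) \<times> {sW j a<..}"

definition E2 :: "nat \<Rightarrow> real \<Rightarrow> real \<Rightarrow> 'a set" where
  "E2 j T a = {\<omega> \<in> space M. 1 \<le> card (Q \<omega> \<inter> W j T a)}"

lemma spF: "space F = UNIV" using sets_eq_imp_space_eq[OF SF] by simp

lemma F_tail:
  assumes a: "0 < a" and int: "integrable F (\<lambda>x. exp (a * x))"
  shows "measure F {s<..} \<le> (\<integral>x. exp (a * x) \<partial>F) / exp (a * s)"
proof -
  have eq: "{x \<in> space F. exp (a * s) \<le> exp (a * x)} = {s..}" using a by (auto simp: spF)
  have "measure F {s<..} \<le> measure F {s..}" by (rule F.finite_measure_mono) (auto simp: SF)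
  also have "\<dots> = measure F {x \<in> space F. exp (a * s) \<le> exp (a * x)}" unfolding eq ..
  also have "\<dots> \<le> (\<integral>x. exp (a * x) \<partial>F) / exp (a * s)"
    by (rule integral_Markov_inequality_measure[OF int, of "space F"]) auto
  finally show ?thesis .
qed

lemma W_props:
  assumes T: "0 < T" and a: "0 < a"
  shows "W j T a \<in> sets mu" "emeasure mu (W j T a) < \<infinity>" "measure mu (W j T a) = 2 * 4 ^ j * T * measure F {sW j a<..}"
proof -
  have le1: "- (4 ^ j) \<le> (4 ^ j :: real)" by simp
  have le2: "0 \<le> T" using T by simp
  show "W j T a \<in> sets mu" unfolding W_def by (rule mu_rect(1)[OF le1 le2]) simp
  show "emeasure mu (W j T a) < \<infinity>" unfolding W_def by (rule rect_finite[OF le1 le2]) simp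
  show "measure mu (W j T a) = 2 * 4 ^ j * T * measure F {sW j a<..}"
    unfolding W_def mu_rect(3)[OF le1 le2 greaterThan_borel] by simp
qed

lemma E2_props:
  assumes T: "0 < T" and a: "0 < a" and int: "integrable F (\<lambda>x. exp (a * x))"
  shows "E2 j T a \<in> sets M" "measure M (E2 j T a) \<le> 2 * T * (\<integral>x. exp (a * x) \<partial>F) * (4 / exp 4) ^ j"
proof -
  show "E2 j T a \<in> sets M" unfolding E2_def by (rule N_ge_meas[OF W_props(1,2)[OF T a]])
  have "measure M (E2 j T a) \<le> measure mu (W j T a) ^ 1 / fact 1"
    unfolding E2_def by (rule N_ge_bound[OF W_props(1,2)[OF T a]])
  also have "\<dots> = 2 * 4 ^ j * T * measure F {sW j a<..}" using W_props(3)[OF T a] by simp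
  also have "\<dots> \<le> 2 * 4 ^ j * T * ((\<integral>x. exp (a * x) \<partial>F) / exp (a * sW j a))"
    by (intro mult_left_mono F_tail[OF a int]) (use T in auto)
  also have "\<dots> = 2 * T * (\<integral>x. exp (a * x) \<partial>F) * (4 / exp 4) ^ j"
  proof -
    have "exp (a * sW j a) = exp 4 ^ j" unfolding sW_def using a exp_of_nat_mult[of j 4] by (simp add: mult.commute)
    then show ?thesis by (simp add: power_divide)
  qed
  finally show "measure M (E2 j T a) \<le> 2 * T * (\<integral>x. exp (a * x) \<partial>F) * (4 / exp 4) ^ j" .
qed

lemma BC1:
  assumes T: "0 < T"
  shows "AE \<omega> in M. eventually (\<lambda>j. \<omega> \<in> space M - E1 j T) sequentially"
proof (rule borel_cantelli_AE1)
  show "\<And>j. E1 j T \<in> sets M" by (rule E1_props(1)[OF T])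
  show "\<And>j. emeasure M (E1 j T) < \<infinity>" by (simp add: M.emeasure_eq_measure)
  show "summable (\<lambda>j. measure M (E1 j T))"
  proof (rule summable_comparison_test'[where N=0])
    show "summable (\<lambda>j. inverse (fact j) * (8 * T) ^ j)" by (rule summable_exp)
    fix j :: nat
    show "norm (measure M (E1 j T)) \<le> inverse (fact j) * (8 * T) ^ j"
      using E1_props(2)[OF T, of j] by (simp add: field_simps)
  qed
qed

lemma BC2:
  assumes T: "0 < T" and a: "0 < a" and int: "integrable F (\<lambda>x. exp (a * x))"
  shows "AE \<omega> in M. eventually (\<lambda>j. \<omega> \<in> space M - E2 j T a) sequentially"
proof (rule borel_cantelli_AE1)
  show "\<And>j. E2 j T a \<in> sets M" by (rule E2_props(1)[OF T a int])
  show "\<And>j. emeasure M (E2 j T a) < \<infinity>" by (simp add: M.emeasure_eq_measure)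
  show "summable (\<lambda>j. measure M (E2 j T a))"
  proof (rule summable_comparison_test'[where N=0])
    have e4: "4 < exp (4::real)" using exp_ge_add_one_self[of 4] by simp
    have "norm (4 / exp (4::real)) < 1" using e4 by simp
    then show "summable (\<lambda>j. 2 * T * (\<integral>x. exp (a * x) \<partial>F) * (4 / exp 4) ^ j)"
      by (intro summable_mult summable_geometric)
    fix j :: nat
    show "norm (measure M (E2 j T a)) \<le> 2 * T * (\<integral>x. exp (a * x) \<partial>F) * (4 / exp 4) ^ j"
      using E2_props(2)[OF T a int, of j] by simp
  qed
qed

lemma AE_G5_T:
  assumes T: "0 < T" and a: "0 < a" and int: "integrable F (\<lambda>x. exp (a * x))"
  shows "AE \<omega> in M. \<forall>e>0. \<exists>R. \<forall>r\<ge>R. LPP (Q \<omega>) (-r,0) (r, T) \<le> ereal (e*r)"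
proof -
  have fc: "AE \<omega> in M. \<forall>jp::nat \<times> (nat \<times> nat). finite (Q \<omega> \<inter> cellC (fst jp) T (snd jp))"
    by (subst AE_all_countable) (intro allI mp_unf(1)[OF cellC_props(1,2)[OF T]])
  have fw: "AE \<omega> in M. \<forall>j::nat. finite (Q \<omega> \<inter> W j T a)"
    by (subst AE_all_countable) (intro allI mp_unf(1)[OF W_props(1,2)[OF T a]])
  have sp: "AE \<omega> in M. \<omega> \<in> space M" by simp
  from fc fw sp BC1[OF T] BC2[OF T a int] show ?thesis
  proof eventually_elim
    case (elim \<omega>)
    obtain J where J: "\<And>j. j \<ge> J \<Longrightarrow> \<omega> \<in> space M - E1 j T \<and> \<omega> \<in> space M - E2 j T a"
      using eventually_conj[OF elim(4) elim(5)] unfolding eventually_sequentially by blast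
    have bound: "LPP (Q \<omega>) (- (4 ^ j), 0) (4 ^ j, T) \<le> ereal (8 * real j ^ 2 * 2 ^ j / a)" if j: "j \<ge> J" for j
    proof -
      have nE1: "\<omega> \<notin> E1 j T" and nE2: "\<omega> \<notin> E2 j T a" using J[OF j] by auto
      have lp: "LPP (Q \<omega>) (- (4 ^ j), 0) (- (4 ^ j) + real ((2::nat) ^ j) * (2 * 2 ^ j), real ((2::nat) ^ j) * (T / 2 ^ j))
              \<le> ereal (real (2 * 2 ^ j * j) * sW j a)"
      proof (rule LPP_grid_bound)
        show "0 < (2 * 2 ^ j :: real)" by simp
        show "0 < T / 2 ^ j" using T by simp
        show "0 \<le> sW j a" unfolding sW_def using a by simp
        show "\<forall>i<2 ^ j. \<forall>l<2 ^ j. finite (Q \<omega> \<inter> ({- (4 ^ j) + real i * (2 * 2 ^ j)<..- (4 ^ j) + (real i + 1) * (2 * 2 ^ j)} \<times>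
               {real l * (T / 2 ^ j)<..(real l + 1) * (T / 2 ^ j)}) \<times> UNIV) \<and>
              card (Q \<omega> \<inter> ({- (4 ^ j) + real i * (2 * 2 ^ j)<..- (4 ^ j) + (real i + 1) * (2 * 2 ^ j)} \<times>
               {real l * (T / 2 ^ j)<..(real l + 1) * (T / 2 ^ j)}) \<times> UNIV) \<le> j"
        proof (intro allI impI conjI)
          fix i l :: nat assume il: "i < 2 ^ j" "l < 2 ^ j"
          have ce: "({- (4 ^ j) + real i * (2 * 2 ^ j)<..- (4 ^ j) + (real i + 1) * (2 * 2 ^ j)} \<times>
               {real l * (T / 2 ^ j)<..(real l + 1) * (T / 2 ^ j)}) \<times> UNIV = cellC j T (i,l)"
            unfolding cellC_def by simp
          show "finite (Q \<omega> \<inter> ({- (4 ^ j) + real i * (2 * 2 ^ j)<..- (4 ^ j) + (real i + 1) * (2 * 2 ^ j)} \<times>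
               {real l * (T / 2 ^ j)<..(real l + 1) * (T / 2 ^ j)}) \<times> UNIV)"
            unfolding ce using elim(1) by (metis fst_conv snd_conv)
          have "\<not> j \<le> card (Q \<omega> \<inter> cellC j T (i,l))"
            using nE1 elim(3) il unfolding E1_def by blast
          then show "card (Q \<omega> \<inter> ({- (4 ^ j) + real i * (2 * 2 ^ j)<..- (4 ^ j) + (real i + 1) * (2 * 2 ^ j)} \<times>
               {real l * (T / 2 ^ j)<..(real l + 1) * (T / 2 ^ j)}) \<times> UNIV) \<le> j"
            unfolding ce by simp
        qed
        have box1: "- (4 ^ j) + real ((2::nat) ^ j) * (2 * 2 ^ j) = (4 ^ j :: real)"
        proof -
          have "(2::real) ^ j * 2 ^ j = (2 * 2) ^ j" by (rule power_mult_distrib[symmetric])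
          then show ?thesis by simp
        qed
        have box2: "real ((2::nat) ^ j) * (T / 2 ^ j) = T" by simp
        show "\<forall>b\<in>Q \<omega>. inbox (- (4 ^ j), 0) (- (4 ^ j) + real ((2::nat) ^ j) * (2 * 2 ^ j), real ((2::nat) ^ j) * (T / 2 ^ j)) b \<longrightarrow> snd b \<le> sW j a"
        proof (intro ballI impI)
          fix b assume b: "b \<in> Q \<omega>" and ib: "inbox (- (4 ^ j), 0) (- (4 ^ j) + real ((2::nat) ^ j) * (2 * 2 ^ j), real ((2::nat) ^ j) * (T / 2 ^ j)) b"
          show "snd b \<le> sW j a"
          proof (rule ccontr)
            assume "\<not> snd b \<le> sW j a"
            then have "b \<in> W j T a" using ib unfolding box1 box2 W_def inbox_def by (auto simp: mem_Times_iff)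
            then have "b \<in> Q \<omega> \<inter> W j T a" using b by simp
            then have "Q \<omega> \<inter> W j T a \<noteq> {}" by blast
            then have "1 \<le> card (Q \<omega> \<inter> W j T a)" using elim(2) by (simp add: Suc_le_eq card_gt_0_iff)
            then have "\<omega> \<in> E2 j T a" unfolding E2_def using elim(3) by simp
            then show False using nE2 by simp
          qed
        qed
      qed
      have eA: "- (4 ^ j) + real ((2::nat) ^ j) * (2 * 2 ^ j) = (4 ^ j :: real)"
      proof -
        have "(2::real) ^ j * 2 ^ j = (2 * 2) ^ j" by (rule power_mult_distrib[symmetric])
        then show ?thesis by simp
      qed
      have eB: "real ((2::nat) ^ j) * (T / 2 ^ j) = T" by simp
      have eC: "real (2 * 2 ^ j * j) * sW j a = 8 * real j ^ 2 * 2 ^ j / a"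
        unfolding sW_def by (simp add: power2_eq_square)
      show ?thesis using lp unfolding eA eB eC .
    qed
    show ?case by (rule G5_det[OF a]) (use bound in blast)
  qed
qed

lemma AE_G5:
  assumes a: "0 < a" and int: "integrable F (\<lambda>x. exp (a * x))"
  shows "AE \<omega> in M. \<forall>T::nat. \<forall>e>0. \<exists>R. \<forall>r\<ge>R. LPP (Q \<omega>) (-r,0) (r, real T) \<le> ereal (e*r)"
proof (subst AE_all_countable, intro allI)
  fix T :: nat
  show "AE \<omega> in M. \<forall>e>0. \<exists>R. \<forall>r\<ge>R. LPP (Q \<omega>) (-r,0) (r, real T) \<le> ereal (e*r)"
  proof (cases "T = 0")
    case True
    show ?thesis
    proof (rule AE_I2, intro allI impI exI[of _ 0])
      fix \<omega> and e r :: real assume "0 < e" "0 \<le> r"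
      have "LPP (Q \<omega>) (-r,0) (r, real T) = 0" using True by (intro LPP_t0) simp
      then show "LPP (Q \<omega>) (-r,0) (r, real T) \<le> ereal (e*r)" using \<open>0 < e\<close> \<open>0 \<le> r\<close> by simp
    qed
  next
    case False
    then show ?thesis by (intro AE_G5_T[OF _ a int]) simp
  qed
qed

end


theorem proposition2p1:
  fixes M :: "'a measure" and Q :: "'a \<Rightarrow> mconf" and F :: "real measure"
    and \<nu> :: "real measure"
  assumes "prob_space M"
    and "prob_space F" and "sets F = sets borel" and "emeasure F {..0} = 0"
    and "\<exists>a>0. integrable F (\<lambda>x. exp (a * x))"
    and "marked_poisson M Q F"
    and "\<nu> \<in> calN"
  shows "AE \<omega> in M.
           (\<forall>x t. 0 \<le> t \<longrightarrow> \<bar>Lnu (Q \<omega>) \<nu> x t\<bar> \<noteq> \<infinity>) \<and>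
           (\<forall>t\<ge>0. is_M (Q \<omega>) \<nu> t (Mt (Q \<omega>) \<nu> t)) \<and>
           Mt (Q \<omega>) \<nu> 0 = \<nu> \<and>
           (\<forall>x0 t w. ((x0, t), w) \<in> Q \<omega> \<and> 0 < t \<longrightarrow>
              (let M1 = Mt (Q \<omega>) \<nu> t;
                   Q0 = Q \<omega> - {((x0, t), w)};
                   M0 = Mt Q0 \<nu> t
               in is_M Q0 \<nu> t M0 \<and>
                  (\<forall>A \<in> sets borel. A \<subseteq> {..<x0} \<longrightarrow> emeasure M1 A = emeasure M0 A) \<and>
                  emeasure M1 {x0} = emeasure M0 {x0} + ennreal w \<and>
                  (\<forall>x > x0. emeasure M1 {x0<..x} = ennreal (max (measure M0 {x0<..x} - w) 0))))"
proof -
  have ST: "setting M F Q" unfolding setting_def setting_axioms_def using assms by auto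
  interpret S: setting M F Q by (rule ST)
  obtain a where a: "0 < a" "integrable F (\<lambda>x. exp (a * x))" using assms(5) by blast
  have "AE \<omega> in M. good \<nu> (Q \<omega>)"
    using S.AE_G1 S.AE_G2 S.AE_G3 S.AE_G4[OF assms(7)] S.AE_G5[OF a]
    unfolding good_def by eventually_elim blast
  then show ?thesis
  proof eventually_elim
    case (elim \<omega>)
    show ?case by (rule det_main[OF assms(7) elim])
  qed
qed

end
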